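(* Let $(\mathcal{C},\Delta,\varepsilon)$ be a cocommutative coassociative counital coalgebra over a field $\mathbb{K}$ and let $(\mathcal{C},T)$ be a trilinear shelf. Equip $\mathcal{C}\otimes\mathcal{C}$ with the tensor product coalgebra structure $\Delta(u\otimes v)=(u_{(1)}\otimes v_{(1)})\otimes(u_{(2)}\otimes v_{(2)})$, $\varepsilon(u\otimes v)=\varepsilon(u)\varepsilon(v)$, and define $\lhd_T:(\mathcal{C}\otimes\mathcal{C})\otimes(\mathcal{C}\otimes\mathcal{C})\to\mathcal{C}\otimes\mathcal{C}$ by $(u\otimes v)\lhd_T(m\otimes n)=T(u,m_{(1)},n_{(1)})\otimes T(v,m_{(2)},n_{(2)})$. Then $(\mathcal{C}\otimes\mathcal{C},\lhd_T)$ is a linear shelf. If moreover $(\mathcal{C},T)$ is a trilinear rack, then $(\mathcal{C}\otimes\mathcal{C},\lhd_T)$ is a linear rack, and the map $R^{\lhd_T}:(\mathcal{C}\otimes\mathcal{C})^{\otimes2}\to(\mathcal{C}\otimes\mathcal{C})^{\otimes 2}$, $R^{\lhd_T}(U\otimes V)=V_{(1)}\otimes(U\lhd_T V_{(2)})$, coincides with the map $R^T$ given by $R^T((u\otimes v)\otimes(m\otimes n))=(m_{(1)}\otimes n_{(1)})\otimes\big(T(u,m_{(2)},n_{(2)})\otimes T(v,m_{(3)},n_{(3)})\big)$.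
   Context: Sweedler notation: $\Delta(x)=x_{(1)}\otimes x_{(2)}$, $(\Delta\otimes\mathrm{Id})\Delta(x)=x_{(1)}\otimes x_{(2)}\otimes x_{(3)}$, etc. Cocommutative means $\tau\circ\Delta=\Delta$ with $\tau$ the flip. A coalgebra morphism $f$ satisfies $\Delta'\circ f=(f\otimes f)\circ\Delta$, $\varepsilon'\circ f=\varepsilon$; tensor powers carry the tensor product coalgebra structure. A linear shelf is a coalgebra $\mathcal{C}$ with a coalgebra morphism $\lhd:\mathcal{C}\otimes\mathcal{C}\to\mathcal{C}$ with $(u\lhd v)\lhd w=(u\lhd w_{(1)})\lhd(v\lhd w_{(2)})$; it is a linear rack if there is a linear shelf structure $\widetilde{\lhd}$ on $\mathcal{C}$ with $(u\lhd v_{(2)})\widetilde{\lhd}v_{(1)}=\varepsilon(v)u=(u\widetilde{\lhd}v_{(2)})\lhd v_{(1)}$ for all $u,v$. A trilinear shelf is a coalgebra $\mathcal{C}$ with a coalgebra morphism $T:\mathcal{C}^{\otimes3}\to\mathcal{C}$ such that $T(T(x,y,z),u,v)=T(T(x,u_{(1)},v_{(1)}),T(y,u_{(2)},v_{(2)}),T(z,u_{(3)},v_{(3)}))$ for all $x,y,z,u,v$; it is a trilinear rack if there is a trilinear shelf structure $\widetilde{T}$ on $\mathcal{C}$ with $\widetilde{T}(T(x,y_{(2)},z_{(2)}),z_{(1)},y_{(1)})=\varepsilon(y)\varepsilon(z)x=T(\widetilde{T}(x,y_{(2)},z_{(2)}),z_{(1)},y_{(1)})$ for all $x,y,z$. 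*)

theory Defs
  imports Main
begin

text \<open>Vector spaces over a field 'k are modelled as free vector spaces with a basis indexed
by a type 'a: vectors are finitely supported functions 'a => 'k.  The tensor product of the
spaces with bases 'a and 'b is the space with basis 'a \<times> 'b.  Linear maps are given by the
images of basis vectors and extended linearly.\<close>

definition fsupp :: "('a \<Rightarrow> 'k::zero) \<Rightarrow> bool" where
  "fsupp v \<longleftrightarrow> finite {a. v a \<noteq> 0}"

definition bvec :: "'a \<Rightarrow> 'a \<Rightarrow> 'k::{zero,one}" where
  "bvec a = (\<lambda>x. if x = a then 1 else 0)"

definition lext :: "('a \<Rightarrow> 'c \<Rightarrow> 'k::comm_ring_1) \<Rightarrow> ('a \<Rightarrow> 'k) \<Rightarrow> 'c \<Rightarrow> 'k" where
  "lext f v = (\<lambda>c. \<Sum>a\<in>{a. v a \<noteq> 0}. v a * f a c)"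

definition lfun :: "('a \<Rightarrow> 'k::comm_ring_1) \<Rightarrow> ('a \<Rightarrow> 'k) \<Rightarrow> 'k" where
  "lfun f v = (\<Sum>a\<in>{a. v a \<noteq> 0}. v a * f a)"

definition tens :: "('a \<Rightarrow> 'k::comm_ring_1) \<Rightarrow> ('b \<Rightarrow> 'k) \<Rightarrow> 'a \<times> 'b \<Rightarrow> 'k" where
  "tens u v = (\<lambda>p. u (fst p) * v (snd p))"

definition tmap :: "('a \<Rightarrow> 'c \<Rightarrow> 'k::comm_ring_1) \<Rightarrow> ('b \<Rightarrow> 'd \<Rightarrow> 'k) \<Rightarrow> ('a \<times> 'b \<Rightarrow> 'k) \<Rightarrow> 'c \<times> 'd \<Rightarrow> 'k" where
  "tmap f g = lext (\<lambda>(a, b). tens (f a) (g b))"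

definition linmap :: "('a \<Rightarrow> 'c \<Rightarrow> 'k::zero) \<Rightarrow> bool" where
  "linmap f \<longleftrightarrow> (\<forall>a. fsupp (f a))"

definition coalgebra :: "('a \<Rightarrow> 'a \<times> 'a \<Rightarrow> 'k::comm_ring_1) \<Rightarrow> ('a \<Rightarrow> 'k) \<Rightarrow> bool" where
  "coalgebra D e \<longleftrightarrow> linmap D
     \<and> (\<forall>a x y z. tmap D bvec (D a) ((x, y), z) = tmap bvec D (D a) (x, (y, z)))
     \<and> (\<forall>a. lext (\<lambda>(x, y). (\<lambda>w. e x * bvec y w)) (D a) = bvec a)
     \<and> (\<forall>a. lext (\<lambda>(x, y). (\<lambda>w. bvec x w * e y)) (D a) = bvec a)"

definition cocommutative :: "('a \<Rightarrow> 'a \<times> 'a \<Rightarrow> 'k) \<Rightarrow> bool" where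
  "cocommutative D \<longleftrightarrow> (\<forall>a x y. D a (x, y) = D a (y, x))"

definition tcD :: "('a \<Rightarrow> 'a \<times> 'a \<Rightarrow> 'k::comm_ring_1) \<Rightarrow> ('b \<Rightarrow> 'b \<times> 'b \<Rightarrow> 'k)
                   \<Rightarrow> 'a \<times> 'b \<Rightarrow> ('a \<times> 'b) \<times> ('a \<times> 'b) \<Rightarrow> 'k" where
  "tcD D1 D2 = (\<lambda>(a, b). (\<lambda>((a1, b1), (a2, b2)). D1 a (a1, a2) * D2 b (b1, b2)))"

definition tce :: "('a \<Rightarrow> 'k::comm_ring_1) \<Rightarrow> ('b \<Rightarrow> 'k) \<Rightarrow> 'a \<times> 'b \<Rightarrow> 'k" where
  "tce e1 e2 = (\<lambda>(a, b). e1 a * e2 b)"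

definition coalg_hom :: "('a \<Rightarrow> 'a \<times> 'a \<Rightarrow> 'k::comm_ring_1) \<Rightarrow> ('a \<Rightarrow> 'k)
    \<Rightarrow> ('c \<Rightarrow> 'c \<times> 'c \<Rightarrow> 'k) \<Rightarrow> ('c \<Rightarrow> 'k) \<Rightarrow> ('a \<Rightarrow> 'c \<Rightarrow> 'k) \<Rightarrow> bool" where
  "coalg_hom D1 e1 D2 e2 f \<longleftrightarrow> linmap f
     \<and> (\<forall>a. lext D2 (f a) = tmap f f (D1 a))
     \<and> (\<forall>a. lfun e2 (f a) = e1 a)"

definition op2 :: "('a \<times> 'a \<Rightarrow> 'a \<Rightarrow> 'k::comm_ring_1) \<Rightarrow> ('a \<Rightarrow> 'k) \<Rightarrow> ('a \<Rightarrow> 'k) \<Rightarrow> 'a \<Rightarrow> 'k" where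
  "op2 L u v = lext L (tens u v)"

definition op3 :: "('a \<times> ('a \<times> 'a) \<Rightarrow> 'a \<Rightarrow> 'k::comm_ring_1)
    \<Rightarrow> ('a \<Rightarrow> 'k) \<Rightarrow> ('a \<Rightarrow> 'k) \<Rightarrow> ('a \<Rightarrow> 'k) \<Rightarrow> 'a \<Rightarrow> 'k" where
  "op3 T x y z = lext T (tens x (tens y z))"

definition Delta2 :: "('a \<Rightarrow> 'a \<times> 'a \<Rightarrow> 'k::comm_ring_1) \<Rightarrow> ('a \<Rightarrow> 'k) \<Rightarrow> 'a \<times> ('a \<times> 'a) \<Rightarrow> 'k" where
  "Delta2 D w = tmap bvec D (lext D w)"

definition linear_shelf :: "('a \<Rightarrow> 'a \<times> 'a \<Rightarrow> 'k::comm_ring_1) \<Rightarrow> ('a \<Rightarrow> 'k)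
    \<Rightarrow> ('a \<times> 'a \<Rightarrow> 'a \<Rightarrow> 'k) \<Rightarrow> bool" where
  "linear_shelf D e L \<longleftrightarrow> coalgebra D e \<and> coalg_hom (tcD D D) (tce e e) D e L
     \<and> (\<forall>u v w. fsupp u \<longrightarrow> fsupp v \<longrightarrow> fsupp w \<longrightarrow>
          op2 L (op2 L u v) w
          = lext (\<lambda>(p, q). op2 L (op2 L u (bvec p)) (op2 L v (bvec q))) (lext D w))"

definition linear_rack :: "('a \<Rightarrow> 'a \<times> 'a \<Rightarrow> 'k::comm_ring_1) \<Rightarrow> ('a \<Rightarrow> 'k)
    \<Rightarrow> ('a \<times> 'a \<Rightarrow> 'a \<Rightarrow> 'k) \<Rightarrow> bool" where
  "linear_rack D e L \<longleftrightarrow> linear_shelf D e L \<and>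
     (\<exists>L'. linear_shelf D e L' \<and>
       (\<forall>u v. fsupp u \<longrightarrow> fsupp v \<longrightarrow>
          lext (\<lambda>(p, q). op2 L' (op2 L u (bvec q)) (bvec p)) (lext D v) = (\<lambda>x. lfun e v * u x)
        \<and> lext (\<lambda>(p, q). op2 L (op2 L' u (bvec q)) (bvec p)) (lext D v) = (\<lambda>x. lfun e v * u x)))"

definition trilinear_shelf :: "('a \<Rightarrow> 'a \<times> 'a \<Rightarrow> 'k::comm_ring_1) \<Rightarrow> ('a \<Rightarrow> 'k)
    \<Rightarrow> ('a \<times> ('a \<times> 'a) \<Rightarrow> 'a \<Rightarrow> 'k) \<Rightarrow> bool" where
  "trilinear_shelf D e T \<longleftrightarrow> coalgebra D e \<and> coalg_hom (tcD D (tcD D D)) (tce e (tce e e)) D e T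
     \<and> (\<forall>x y z u v. fsupp x \<longrightarrow> fsupp y \<longrightarrow> fsupp z \<longrightarrow> fsupp u \<longrightarrow> fsupp v \<longrightarrow>
          op3 T (op3 T x y z) u v
          = lext (\<lambda>((p1, (p2, p3)), (q1, (q2, q3))).
                    op3 T (op3 T x (bvec p1) (bvec q1)) (op3 T y (bvec p2) (bvec q2))
                          (op3 T z (bvec p3) (bvec q3)))
                 (tens (Delta2 D u) (Delta2 D v)))"

definition trilinear_rack :: "('a \<Rightarrow> 'a \<times> 'a \<Rightarrow> 'k::comm_ring_1) \<Rightarrow> ('a \<Rightarrow> 'k)
    \<Rightarrow> ('a \<times> ('a \<times> 'a) \<Rightarrow> 'a \<Rightarrow> 'k) \<Rightarrow> bool" where
  "trilinear_rack D e T \<longleftrightarrow> trilinear_shelf D e T \<and>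
     (\<exists>T'. trilinear_shelf D e T' \<and>
       (\<forall>x y z. fsupp x \<longrightarrow> fsupp y \<longrightarrow> fsupp z \<longrightarrow>
          lext (\<lambda>((p1, p2), (q1, q2)). op3 T' (op3 T x (bvec p2) (bvec q2)) (bvec q1) (bvec p1))
               (tens (lext D y) (lext D z)) = (\<lambda>w. lfun e y * lfun e z * x w)
        \<and> lext (\<lambda>((p1, p2), (q1, q2)). op3 T (op3 T' x (bvec p2) (bvec q2)) (bvec q1) (bvec p1))
               (tens (lext D y) (lext D z)) = (\<lambda>w. lfun e y * lfun e z * x w)))"

definition lhdT :: "('a \<Rightarrow> 'a \<times> 'a \<Rightarrow> 'k::comm_ring_1) \<Rightarrow> ('a \<times> ('a \<times> 'a) \<Rightarrow> 'a \<Rightarrow> 'k)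
    \<Rightarrow> ('a \<times> 'a) \<times> ('a \<times> 'a) \<Rightarrow> 'a \<times> 'a \<Rightarrow> 'k" where
  "lhdT D T = (\<lambda>((u, v), (m, n)).
      lext (\<lambda>((m1, m2), (n1, n2)). tens (op3 T (bvec u) (bvec m1) (bvec n1))
                                          (op3 T (bvec v) (bvec m2) (bvec n2)))
           (tens (D m) (D n)))"

definition Rlhd :: "('b \<Rightarrow> 'b \<times> 'b \<Rightarrow> 'k::comm_ring_1) \<Rightarrow> ('b \<times> 'b \<Rightarrow> 'b \<Rightarrow> 'k)
    \<Rightarrow> 'b \<times> 'b \<Rightarrow> 'b \<times> 'b \<Rightarrow> 'k" where
  "Rlhd D L = (\<lambda>(U, V). lext (\<lambda>(p, q). tens (bvec p) (op2 L (bvec U) (bvec q))) (D V))"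

definition RT :: "('a \<Rightarrow> 'a \<times> 'a \<Rightarrow> 'k::comm_ring_1) \<Rightarrow> ('a \<times> ('a \<times> 'a) \<Rightarrow> 'a \<Rightarrow> 'k)
    \<Rightarrow> ('a \<times> 'a) \<times> ('a \<times> 'a) \<Rightarrow> ('a \<times> 'a) \<times> ('a \<times> 'a) \<Rightarrow> 'k" where
  "RT D T = (\<lambda>((u, v), (m, n)).
      lext (\<lambda>((m1, (m2, m3)), (n1, (n2, n3))).
              tens (tens (bvec m1) (bvec n1))
                   (tens (op3 T (bvec u) (bvec m2) (bvec n2)) (op3 T (bvec v) (bvec m3) (bvec n3))))
           (tens (Delta2 D (bvec m)) (Delta2 D (bvec n))))"

end

theory Submission
  imports Defs
begin

lemma fsupp_bvec[simp]: "fsupp (bvec a :: 'a \<Rightarrow> 'k::comm_ring_1)"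
proof -
  have "{x. (bvec a :: 'a \<Rightarrow> 'k) x \<noteq> 0} = {a}" by (auto simp: bvec_def)
  then show ?thesis by (simp add: fsupp_def)
qed

lemma supp_bvec: "{x. (bvec a :: 'a \<Rightarrow> 'k::comm_ring_1) x \<noteq> 0} = {a}"
  by (auto simp: bvec_def)

lemma lext_sum:
  assumes "fsupp v" "finite S" "{a. v a \<noteq> 0} \<subseteq> S"
  shows "lext f v c = (\<Sum>a\<in>S. v a * f a c)"
  unfolding lext_def
  by (rule sum.mono_neutral_left) (use assms in auto)

lemma lext_bvec[simp]: "lext f (bvec a) = f a"
  by (rule ext) (simp add: lext_def supp_bvec bvec_def)

lemma lext_nz: "lext f v c \<noteq> 0 \<Longrightarrow> \<exists>a. v a \<noteq> 0 \<and> f a c \<noteq> 0"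
proof -
  assume "lext f v c \<noteq> 0"
  then obtain a where "a \<in> {a. v a \<noteq> 0}" "v a * f a c \<noteq> 0"
    unfolding lext_def by (meson sum.not_neutral_contains_not_neutral)
  then show ?thesis by auto
qed

lemma fsupp_lext:
  assumes "fsupp v" "\<And>a. v a \<noteq> 0 \<Longrightarrow> fsupp (f a)"
  shows "fsupp (lext f v)"
proof -
  have "{c. lext f v c \<noteq> 0} \<subseteq> (\<Union>a\<in>{a. v a \<noteq> 0}. {c. f a c \<noteq> 0})"
    by (auto dest!: lext_nz)
  moreover have "finite (\<Union>a\<in>{a. v a \<noteq> 0}. {c. f a c \<noteq> 0})"
    using assms by (auto simp: fsupp_def)
  ultimately show ?thesis unfolding fsupp_def by (rule finite_subset)
qed

lemma lext_lext:
  assumes v: "fsupp v" and g: "\<And>a. v a \<noteq> 0 \<Longrightarrow> fsupp (g a)"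
  shows "lext f (lext g v) = lext (\<lambda>a. lext f (g a)) v"
proof (rule ext)
  fix c
  let ?A = "{a. v a \<noteq> 0}"
  let ?B = "\<Union>a\<in>?A. {b. g a b \<noteq> 0}"
  have fA: "finite ?A" using v by (simp add: fsupp_def)
  have fB: "finite ?B" using v g by (auto simp: fsupp_def)
  have sub: "{b. lext g v b \<noteq> 0} \<subseteq> ?B"
    by (auto dest!: lext_nz)
  have "lext f (lext g v) c = (\<Sum>b\<in>?B. lext g v b * f b c)"
    by (rule lext_sum[OF fsupp_lext[OF v g] fB sub])
  also have "\<dots> = (\<Sum>b\<in>?B. \<Sum>a\<in>?A. v a * g a b * f b c)"
    by (simp add: lext_def sum_distrib_right)
  also have "\<dots> = (\<Sum>a\<in>?A. \<Sum>b\<in>?B. v a * g a b * f b c)"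
    by (rule sum.swap)
  also have "\<dots> = (\<Sum>a\<in>?A. v a * lext f (g a) c)"
  proof (rule sum.cong[OF refl])
    fix a assume a: "a \<in> ?A"
    have "lext f (g a) c = (\<Sum>b\<in>?B. g a b * f b c)"
      by (rule lext_sum) (use a g fB in auto)
    then show "(\<Sum>b\<in>?B. v a * g a b * f b c) = v a * lext f (g a) c"
      by (simp add: sum_distrib_left mult.assoc)
  qed
  also have "\<dots> = lext (\<lambda>a. lext f (g a)) v c"
    by (simp add: lext_def)
  finally show "lext f (lext g v) c = lext (\<lambda>a. lext f (g a)) v c" .
qed

lemma supp_tens:
  "{p. tens (x::'a \<Rightarrow> 'k::field) (y::'b \<Rightarrow> 'k) p \<noteq> 0} = {a. x a \<noteq> 0} \<times> {b. y b \<noteq> 0}"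
  by (auto simp: tens_def)

lemma fsupp_tens[simp]:
  "fsupp (x::'a \<Rightarrow> 'k::field) \<Longrightarrow> fsupp (y::'b \<Rightarrow> 'k) \<Longrightarrow> fsupp (tens x y)"
  by (simp add: fsupp_def supp_tens)

lemma lext_tens:
  assumes "fsupp (x::'a \<Rightarrow> 'k::field)" "fsupp (y::'b \<Rightarrow> 'k)"
  shows "lext f (tens x y) = lext (\<lambda>a. lext (\<lambda>b. f (a, b)) y) x"
proof (rule ext)
  fix c
  have "lext f (tens x y) c = (\<Sum>p\<in>{a. x a \<noteq> 0} \<times> {b. y b \<noteq> 0}. tens x y p * f p c)"
    by (simp add: lext_def supp_tens)
  also have "\<dots> = (\<Sum>(a,b)\<in>{a. x a \<noteq> 0} \<times> {b. y b \<noteq> 0}. x a * (y b * f (a, b) c))"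
    by (rule sum.cong) (auto simp: tens_def mult.assoc)
  also have "\<dots> = (\<Sum>a\<in>{a. x a \<noteq> 0}. \<Sum>b\<in>{b. y b \<noteq> 0}. x a * (y b * f (a, b) c))"
    by (rule sum.cartesian_product[symmetric])
  also have "\<dots> = lext (\<lambda>a. lext (\<lambda>b. f (a, b)) y) x c"
    by (simp add: lext_def sum_distrib_left)
  finally show "lext f (tens x y) c = lext (\<lambda>a. lext (\<lambda>b. f (a, b)) y) x c" .
qed

lemma lext_swap:
  assumes "fsupp x" "fsupp y"
  shows "lext (\<lambda>a. lext (\<lambda>b. F a b) y) x = lext (\<lambda>b. lext (\<lambda>a. F a b) x) y"
proof (rule ext)
  fix c
  have "lext (\<lambda>a. lext (\<lambda>b. F a b) y) x c
     = (\<Sum>a\<in>{a. x a \<noteq> 0}. \<Sum>b\<in>{b. y b \<noteq> 0}. x a * (y b * F a b c))"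
    unfolding lext_def by (simp add: sum_distrib_left)
  also have "\<dots> = (\<Sum>b\<in>{b. y b \<noteq> 0}. \<Sum>a\<in>{a. x a \<noteq> 0}. x a * (y b * F a b c))"
    by (rule sum.swap)
  also have "\<dots> = lext (\<lambda>b. lext (\<lambda>a. F a b) x) y c"
    unfolding lext_def by (simp add: sum_distrib_left mult.left_commute)
  finally show "lext (\<lambda>a. lext (\<lambda>b. F a b) y) x c = lext (\<lambda>b. lext (\<lambda>a. F a b) x) y c" .
qed

lemma lext_swap2:
  assumes "fsupp x" "fsupp y"
  shows "lext (\<lambda>a. lext (G a) y) x = lext (\<lambda>b. lext (\<lambda>a. G a b) x) y"
  using lext_swap[OF assms, of "\<lambda>a b. G a b"] by simp

lemma lext_reindex:
  assumes gh: "\<And>x. g (h x) = x" and hg: "\<And>y. h (g y) = y"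
  shows "lext F (\<lambda>x. v (h x)) = lext (\<lambda>y. F (g y)) v"
proof (rule ext)
  fix c
  have e: "{x. v (h x) \<noteq> 0} = g ` {y. v y \<noteq> 0}"
  proof
    show "{x. v (h x) \<noteq> 0} \<subseteq> g ` {y. v y \<noteq> 0}"
    proof
      fix x assume "x \<in> {x. v (h x) \<noteq> 0}"
      then have "h x \<in> {y. v y \<noteq> 0}" by simp
      then show "x \<in> g ` {y. v y \<noteq> 0}" using gh[of x] by (metis image_eqI)
    qed
    show "g ` {y. v y \<noteq> 0} \<subseteq> {x. v (h x) \<noteq> 0}" using hg by auto
  qed
  have i: "inj_on g {y. v y \<noteq> 0}" by (rule inj_onI) (metis hg)
  show "lext F (\<lambda>x. v (h x)) c = lext (\<lambda>y. F (g y)) v c"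
    unfolding lext_def e sum.reindex[OF i] by (simp add: hg)
qed

lemma lext_cong:
  "(\<And>a. v a \<noteq> 0 \<Longrightarrow> f a = g a) \<Longrightarrow> lext f v = lext g v"
  unfolding lext_def by (intro ext sum.cong) auto

lemma lext_point: "lext f v c = lext (\<lambda>a _. f a c) v ()"
  by (simp add: lext_def)

lemma lext_const_mult: "lext (\<lambda>a c. k * f a c) v = (\<lambda>c. k * lext f v c)"
  by (simp add: lext_def sum_distrib_left mult.left_commute)

lemma lext_smult_bvec: "lext f (\<lambda>c. k * bvec a c) = (\<lambda>c. k * f a c)"
proof (cases "k = 0")
  case True then show ?thesis by (simp add: lext_def)
next
  case False
  then have "{x. k * bvec a x \<noteq> 0} = {a}" by (auto simp: bvec_def)
  then show ?thesis by (simp add: lext_def bvec_def)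
qed

lemma lext_zero_fun: "lext (\<lambda>a c. 0) v = (\<lambda>c. 0)"
  by (simp add: lext_def)

lemma lfun_lext: "lfun e v = lext (\<lambda>a _. e a) v ()"
  by (simp add: lfun_def lext_def)

lemma fsupp_smult[simp]: "fsupp v \<Longrightarrow> fsupp (\<lambda>w. (k::'k::field) * v w)"
  unfolding fsupp_def by (rule finite_subset[of _ "{a. v a \<noteq> 0}"]) auto

lemma fsupp_smult'[simp]: "fsupp v \<Longrightarrow> fsupp (\<lambda>w. v w * (k::'k::field))"
  unfolding fsupp_def by (rule finite_subset[of _ "{a. v a \<noteq> 0}"]) auto

lemma tens_bvec[simp]: "tens (bvec a :: 'a \<Rightarrow> 'k::comm_ring_1) (bvec b) = bvec (a, b)"
  by (auto simp: tens_def bvec_def)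

lemma tmap_D_bvec:
  assumes "fsupp (v::'a \<times> 'b \<Rightarrow> 'k::field)" "\<And>a. fsupp (D a)"
  shows "lext G (tmap D bvec v) = lext (\<lambda>(p,q). lext (\<lambda>rs. G (rs, q)) (D p)) v"
  unfolding tmap_def using assms
  by (subst lext_lext) (auto simp: lext_tens split_beta split_beta' intro!: lext_cong)

lemma tmap_bvec_D:
  assumes "fsupp (v::'a \<times> 'b \<Rightarrow> 'k::field)" "\<And>a. fsupp (D a)"
  shows "lext G (tmap bvec D v) = lext (\<lambda>(p,q). lext (\<lambda>rs. G (p, rs)) (D q)) v"
  unfolding tmap_def using assms
  by (subst lext_lext) (auto simp: lext_tens split_beta split_beta' intro!: lext_cong)

lemma coalg_fsupp: "coalgebra D e \<Longrightarrow> fsupp (D a)"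
  by (simp add: coalgebra_def linmap_def)

lemma coalg_assoc:
  fixes D :: "'a \<Rightarrow> 'a \<times> 'a \<Rightarrow> 'k::field"
  assumes "coalgebra D e"
  shows "lext (\<lambda>(p,q). lext (\<lambda>(r,s). G r s q) (D p)) (D w)
       = lext (\<lambda>(p,q). lext (\<lambda>(r,s). G p r s) (D q)) (D w)"
proof -
  have fs: "\<And>a. fsupp (D a)" using assms by (simp add: coalg_fsupp)
  have ax: "tmap D bvec (D w) = (\<lambda>x. tmap bvec D (D w) (fst (fst x), snd (fst x), snd x))"
    using assms unfolding coalgebra_def by (auto simp: split_beta split_beta')
  have "lext (\<lambda>(p,q). lext (\<lambda>(r,s). G r s q) (D p)) (D w)
      = lext (\<lambda>((r,s),q). G r s q) (tmap D bvec (D w))"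
    by (simp add: tmap_D_bvec fs split_beta split_beta')
  also have "\<dots> = lext (\<lambda>(p,(r,s)). G p r s) (tmap bvec D (D w))"
    unfolding ax
    by (subst lext_reindex[where g = "\<lambda>(a,b,c). ((a,b),c)"]) (auto simp: split_beta split_beta')
  also have "\<dots> = lext (\<lambda>(p,q). lext (\<lambda>(r,s). G p r s) (D q)) (D w)"
    by (simp add: tmap_bvec_D fs split_beta split_beta')
  finally show ?thesis .
qed

lemma coalg_counitL:
  fixes D :: "'a \<Rightarrow> 'a \<times> 'a \<Rightarrow> 'k::field"
  assumes "coalgebra D e"
  shows "lext (\<lambda>(p,q) c. e p * F q c) (D w) = F w"
proof -
  have fs: "\<And>a. fsupp (D a)" using assms by (simp add: coalg_fsupp)
  have ax: "lext (\<lambda>(x, y). (\<lambda>w. e x * bvec y w)) (D w) = bvec w"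
    using assms unfolding coalgebra_def by auto
  have "F w = lext F (lext (\<lambda>(x, y). (\<lambda>w. e x * bvec y w)) (D w))"
    by (simp add: ax)
  also have "\<dots> = lext (\<lambda>(p,q) c. e p * F q c) (D w)"
    by (subst lext_lext) (auto simp: fs split_beta split_beta' lext_smult_bvec intro!: lext_cong)
  finally show ?thesis by simp
qed

lemma coalg_counitR:
  fixes D :: "'a \<Rightarrow> 'a \<times> 'a \<Rightarrow> 'k::field"
  assumes "coalgebra D e"
  shows "lext (\<lambda>(p,q) c. e q * F p c) (D w) = F w"
proof -
  have fs: "\<And>a. fsupp (D a)" using assms by (simp add: coalg_fsupp)
  have ax: "lext (\<lambda>(x, y). (\<lambda>w. bvec x w * e y)) (D w) = bvec w"
    using assms unfolding coalgebra_def by auto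
  have "F w = lext F (lext (\<lambda>(x, y). (\<lambda>w. bvec x w * e y)) (D w))"
    by (simp add: ax)
  also have "\<dots> = lext (\<lambda>(p,q) c. e q * F p c) (D w)"
    by (subst lext_lext) (auto simp: fs split_beta split_beta' lext_smult_bvec mult.commute intro!: lext_cong)
  finally show ?thesis by simp
qed

lemma cocomm_swap:
  assumes "cocommutative D"
  shows "lext (\<lambda>(p,q). F p q) (D w) = lext (\<lambda>(p,q). F q p) (D w)"
proof -
  have "D w = (\<lambda>x. D w (snd x, fst x))" using assms
    by (auto simp: cocommutative_def)
  then have "lext (\<lambda>(p,q). F p q) (D w) = lext (\<lambda>(p,q). F p q) (\<lambda>x. D w (snd x, fst x))"
    by simp
  also have "\<dots> = lext (\<lambda>(p,q). F q p) (D w)"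
    by (subst lext_reindex[where g = "\<lambda>(a,b). (b,a)"]) (auto simp: split_beta split_beta')
  finally show ?thesis .
qed

lemma lext_bvec_id: "fsupp v \<Longrightarrow> lext bvec v = v"
proof (rule ext)
  fix c assume v: "fsupp v"
  show "lext bvec v c = v c"
  proof (cases "v c = 0")
    case True
    then show ?thesis unfolding lext_def bvec_def by (auto intro!: sum.neutral)
  next
    case False
    have "lext bvec v c = (\<Sum>a\<in>{a. v a \<noteq> 0}. v a * bvec a c)" by (simp add: lext_def)
    also have "\<dots> = v c * bvec c c"
      by (rule sum.remove[where x=c, THEN trans]) (use v False in \<open>auto simp: fsupp_def bvec_def split: if_splits intro!: sum.neutral\<close>)
    finally show ?thesis by (simp add: bvec_def)
  qed
qed

lemma tcD_reindex: "tcD D1 D2 (a, b) = (\<lambda>x. tens (D1 a) (D2 b) ((fst (fst x), fst (snd x)), (snd (fst x), snd (snd x))))"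
  by (auto simp: tcD_def tens_def split_beta)

lemma lext_tcD:
  fixes D1 :: "'a \<Rightarrow> 'a \<times> 'a \<Rightarrow> 'k::field" and D2 :: "'b \<Rightarrow> 'b \<times> 'b \<Rightarrow> 'k"
  assumes "fsupp (D1 a)" "fsupp (D2 b)"
  shows "lext F (tcD D1 D2 (a, b)) = lext (\<lambda>(a1,a2). lext (\<lambda>(b1,b2). F ((a1,b1),(a2,b2))) (D2 b)) (D1 a)"
  unfolding tcD_reindex
  by (subst lext_reindex[where g = "\<lambda>x. ((fst (fst x), fst (snd x)), (snd (fst x), snd (snd x)))"])
     (auto simp: lext_tens assms split_beta split_beta')

lemma fsupp_tcD:
  fixes D1 :: "'a \<Rightarrow> 'a \<times> 'a \<Rightarrow> 'k::field" and D2 :: "'b \<Rightarrow> 'b \<times> 'b \<Rightarrow> 'k"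
  assumes "fsupp (D1 a)" "fsupp (D2 b)"
  shows "fsupp (tcD D1 D2 (a, b))"
proof -
  let ?h = "\<lambda>((a1,a2),(b1,b2)). ((a1,b1),(a2,b2))"
  have "{x. tcD D1 D2 (a, b) x \<noteq> 0} \<subseteq> ?h ` ({x. D1 a x \<noteq> 0} \<times> {x. D2 b x \<noteq> 0})"
  proof
    fix x assume "x \<in> {x. tcD D1 D2 (a, b) x \<noteq> 0}"
    then obtain a1 a2 b1 b2 where x: "x = ((a1,b1),(a2,b2))" "D1 a (a1,a2) \<noteq> 0" "D2 b (b1,b2) \<noteq> 0"
      by (cases x) (auto simp: tcD_def)
    then show "x \<in> ?h ` ({x. D1 a x \<noteq> 0} \<times> {x. D2 b x \<noteq> 0})"
      by (auto intro!: image_eqI[where x="((a1,a2),(b1,b2))"])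
  qed
  moreover have "finite (?h ` ({x. D1 a x \<noteq> 0} \<times> {x. D2 b x \<noteq> 0}))"
    using assms by (simp add: fsupp_def)
  ultimately show ?thesis unfolding fsupp_def by (rule finite_subset)
qed

lemma lext_point_eq: "(\<And>a. f a c1 = g a c2) \<Longrightarrow> lext f v c1 = lext g v c2"
  by (simp add: lext_def)

lemma fsupp_tmap:
  assumes "fsupp (v::'a \<times> 'b \<Rightarrow> 'k::field)" "\<And>a. fsupp (f a)" "\<And>b. fsupp (g b)"
  shows "fsupp (tmap f g v)"
  unfolding tmap_def by (rule fsupp_lext) (auto simp: assms split_beta)

lemma coalg_intro:
  fixes D :: "'a \<Rightarrow> 'a \<times> 'a \<Rightarrow> 'k::field"
  assumes fs: "\<And>a. fsupp (D a)"
  and ca: "\<And>w (G::'a \<Rightarrow> 'a \<Rightarrow> 'a \<Rightarrow> ('a\<times>'a)\<times>'a \<Rightarrow> 'k).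
     lext (\<lambda>(p,q). lext (\<lambda>(r,s). G r s q) (D p)) (D w) = lext (\<lambda>(p,q). lext (\<lambda>(r,s). G p r s) (D q)) (D w)"
  and cl: "\<And>w (F::'a \<Rightarrow> 'a \<Rightarrow> 'k). lext (\<lambda>(p,q) c. e p * F q c) (D w) = F w"
  and cr: "\<And>w (F::'a \<Rightarrow> 'a \<Rightarrow> 'k). lext (\<lambda>(p,q) c. e q * F p c) (D w) = F w"
  shows "coalgebra D e"
  unfolding coalgebra_def
proof (intro conjI allI)
  show "linmap D" using fs by (simp add: linmap_def)
next
  fix a x y z
  have "tmap D bvec (D a) ((x,y),z) = lext bvec (tmap D bvec (D a)) ((x,y),z)"
    by (simp add: lext_bvec_id fsupp_tmap fs)
  also have "\<dots> = lext (\<lambda>(p,q). lext (\<lambda>(r,s). bvec ((r,s),q)) (D p)) (D a) ((x,y),z)"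
    by (simp add: tmap_D_bvec fs split_beta')
  also have "\<dots> = lext (\<lambda>(p,q). lext (\<lambda>(r,s). bvec ((p,r),s)) (D q)) (D a) ((x,y),z)"
    by (rule arg_cong[where f="\<lambda>h. h ((x,y),z)"], rule ca)
  also have "\<dots> = lext (\<lambda>(p,q). lext (\<lambda>rs. bvec (p, rs)) (D q)) (D a) (x,(y,z))"
    by (rule lext_point_eq, simp add: split_beta, rule lext_point_eq, auto simp: bvec_def split: if_splits)
  also have "\<dots> = lext bvec (tmap bvec D (D a)) (x,(y,z))"
    by (simp add: tmap_bvec_D fs split_beta')
  also have "\<dots> = tmap bvec D (D a) (x,(y,z))"
    by (simp add: lext_bvec_id fsupp_tmap fs)
  finally show "tmap D bvec (D a) ((x, y), z) = tmap bvec D (D a) (x, y, z)" .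
next
  fix a
  show "lext (\<lambda>(x, y). (\<lambda>w. e x * bvec y w)) (D a) = bvec a" using cl[where w=a and F=bvec] .
next
  fix a
  show "lext (\<lambda>(x, y). (\<lambda>w. bvec x w * e y)) (D a) = bvec a" using cr[where w=a and F=bvec]
    by (simp add: mult.commute)
qed

lemma coalgebra_tcD:
  fixes D1 :: "'a \<Rightarrow> 'a \<times> 'a \<Rightarrow> 'k::field" and D2 :: "'b \<Rightarrow> 'b \<times> 'b \<Rightarrow> 'k"
  assumes c1: "coalgebra D1 e1" and c2: "coalgebra D2 e2"
  shows "coalgebra (tcD D1 D2) (tce e1 e2)"
proof (rule coalg_intro)
  have f1: "\<And>a. fsupp (D1 a)" and f2: "\<And>a. fsupp (D2 a)" using c1 c2 by (auto simp: coalg_fsupp)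
  show fs: "\<And>a. fsupp (tcD D1 D2 a)" by (auto simp: fsupp_tcD f1 f2)
  fix w :: "'a \<times> 'b"
  obtain a b where w: "w = (a, b)" by (cases w)
  {
    fix G :: "'a \<times> 'b \<Rightarrow> 'a \<times> 'b \<Rightarrow> 'a \<times> 'b \<Rightarrow> (('a \<times> 'b) \<times> 'a \<times> 'b) \<times> 'a \<times> 'b \<Rightarrow> 'k"
    have "lext (\<lambda>(p,q). lext (\<lambda>(r,s). G r s q) (tcD D1 D2 p)) (tcD D1 D2 w)
      = lext (\<lambda>(a1,a2). lext (\<lambda>(b1,b2). lext (\<lambda>(a11,a12). lext (\<lambda>(b11,b12).
           G (a11,b11) (a12,b12) (a2,b2)) (D2 b1)) (D1 a1)) (D2 b)) (D1 a)"
      by (simp add: w lext_tcD f1 f2 split_beta' split_beta)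
    also have "\<dots> = lext (\<lambda>(a1,a2). lext (\<lambda>(a11,a12). lext (\<lambda>(b1,b2). lext (\<lambda>(b11,b12).
           G (a11,b11) (a12,b12) (a2,b2)) (D2 b1)) (D2 b)) (D1 a1)) (D1 a)"
      by (rule lext_cong) (auto simp: split_beta' intro!: lext_swap f1 f2)
    also have "\<dots> = lext (\<lambda>(a1,a2). lext (\<lambda>(a11,a12). lext (\<lambda>(b1,b2). lext (\<lambda>(b21,b22).
           G (a11,b1) (a12,b21) (a2,b22)) (D2 b2)) (D2 b)) (D1 a1)) (D1 a)"
      by (subst coalg_assoc[OF c2]) (rule refl)
    also have "\<dots> = lext (\<lambda>(a1,a2). lext (\<lambda>(a21,a22). lext (\<lambda>(b1,b2). lext (\<lambda>(b21,b22).
           G (a1,b1) (a21,b21) (a22,b22)) (D2 b2)) (D2 b)) (D1 a2)) (D1 a)"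
      by (rule coalg_assoc[OF c1])
    also have "\<dots> = lext (\<lambda>(a1,a2). lext (\<lambda>(b1,b2). lext (\<lambda>(a21,a22). lext (\<lambda>(b21,b22).
           G (a1,b1) (a21,b21) (a22,b22)) (D2 b2)) (D1 a2)) (D2 b)) (D1 a)"
      by (rule lext_cong) (auto simp: split_beta' intro!: lext_swap f1 f2)
    also have "\<dots> = lext (\<lambda>(p,q). lext (\<lambda>(r,s). G p r s) (tcD D1 D2 q)) (tcD D1 D2 w)"
      by (simp add: w lext_tcD f1 f2 split_beta' split_beta)
    finally show "lext (\<lambda>(p,q). lext (\<lambda>(r,s). G r s q) (tcD D1 D2 p)) (tcD D1 D2 w)
       = lext (\<lambda>(p,q). lext (\<lambda>(r,s). G p r s) (tcD D1 D2 q)) (tcD D1 D2 w)" .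
  }
  {
    fix F :: "'a \<times> 'b \<Rightarrow> 'a \<times> 'b \<Rightarrow> 'k"
    have "lext (\<lambda>(p,q) c. tce e1 e2 p * F q c) (tcD D1 D2 w)
       = lext (\<lambda>(a1,a2) c. e1 a1 * lext (\<lambda>(b1,b2) c. e2 b1 * F (a2,b2) c) (D2 b) c) (D1 a)"
      by (simp add: w lext_tcD f1 f2 split_beta' tce_def mult.assoc lext_const_mult[symmetric])
    also have "\<dots> = F w"
      by (simp add: coalg_counitL[OF c2, where F="\<lambda>b2. F (_, b2)"] coalg_counitL[OF c1, where F="\<lambda>a2. F (a2, b)"] w)
    finally show "lext (\<lambda>(p,q) c. tce e1 e2 p * F q c) (tcD D1 D2 w) = F w" .
  }
  {
    fix F :: "'a \<times> 'b \<Rightarrow> 'a \<times> 'b \<Rightarrow> 'k"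
    have "lext (\<lambda>(p,q) c. tce e1 e2 q * F p c) (tcD D1 D2 w)
       = lext (\<lambda>(a1,a2) c. e1 a2 * lext (\<lambda>(b1,b2) c. e2 b2 * F (a1,b1) c) (D2 b) c) (D1 a)"
      by (simp add: w lext_tcD f1 f2 split_beta' tce_def mult.assoc lext_const_mult[symmetric])
    also have "\<dots> = F w"
      by (simp add: coalg_counitR[OF c2, where F="\<lambda>b2. F (_, b2)"] coalg_counitR[OF c1, where F="\<lambda>a2. F (a2, b)"] w)
    finally show "lext (\<lambda>(p,q) c. tce e1 e2 q * F p c) (tcD D1 D2 w) = F w" .
  }
qed

lemma lext_cong2: "(\<And>a. f a = g a) \<Longrightarrow> lext f v = lext g v"
  by (rule lext_cong) auto

lemma cocomm_tcD:
  "cocommutative D1 \<Longrightarrow> cocommutative D2 \<Longrightarrow> cocommutative (tcD D1 D2)"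
  unfolding cocommutative_def tcD_def by auto

lemma middle_swap0:
  fixes D :: "'a \<Rightarrow> 'a \<times> 'a \<Rightarrow> 'k::field"
  assumes c: "coalgebra D e"
  shows "lext (\<lambda>(p,q). lext (\<lambda>(a,b). lext (\<lambda>(c,d). F a b c d) (D q)) (D p)) (D w)
       = lext (\<lambda>(a,q). lext (\<lambda>(r,d). lext (\<lambda>(b,c). F a b c d) (D r)) (D q)) (D w)"
proof -
  have "lext (\<lambda>(p,q). lext (\<lambda>(a,b). lext (\<lambda>(c,d). F a b c d) (D q)) (D p)) (D w)
     = lext (\<lambda>(a,q). lext (\<lambda>(b,r). lext (\<lambda>(c,d). F a b c d) (D r)) (D q)) (D w)"
    by (rule coalg_assoc[OF c])
  also have "\<dots> = lext (\<lambda>(a,q). lext (\<lambda>(r,d). lext (\<lambda>(b,c). F a b c d) (D r)) (D q)) (D w)"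
    by (rule lext_cong2, simp add: split_beta, rule coalg_assoc[OF c, symmetric])
  finally show ?thesis .
qed

lemma middle_swap:
  fixes D :: "'a \<Rightarrow> 'a \<times> 'a \<Rightarrow> 'k::field"
  assumes c: "coalgebra D e" and cc: "cocommutative D"
  shows "lext (\<lambda>(p,q). lext (\<lambda>(a,b). lext (\<lambda>(c,d). F a b c d) (D q)) (D p)) (D w)
       = lext (\<lambda>(p,q). lext (\<lambda>(a,b). lext (\<lambda>(c,d). F a c b d) (D q)) (D p)) (D w)"
  unfolding middle_swap0[OF c]
  by (rule lext_cong2, simp add: split_beta, rule lext_cong2, simp add: split_beta, rule cocomm_swap[OF cc])

lemma lext_mult_lfun: "lext (\<lambda>x c. e x * H c) v = (\<lambda>c. lfun e v * H c)"
  by (simp add: lext_def lfun_def sum_distrib_right mult.assoc)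

lemma hom_L:
  fixes f :: "'a \<Rightarrow> 'c \<Rightarrow> 'k::field"
  assumes h: "coalg_hom D1 e1 D2 e2 f" and f2: "\<And>x. fsupp (D2 x)"
    and f1: "fsupp (D1 a)"
  shows "lext (\<lambda>x. lext G (D2 x)) (f a)
       = lext (\<lambda>(a1,a2). lext (\<lambda>x1. lext (\<lambda>x2. G (x1, x2)) (f a2)) (f a1)) (D1 a)"
proof -
  have ff: "\<And>b. fsupp (f b)" using h by (simp add: coalg_hom_def linmap_def)
  have "lext (\<lambda>x. lext G (D2 x)) (f a) = lext G (lext D2 (f a))"
    by (rule lext_lext[symmetric]) (auto simp: ff f2)
  also have "\<dots> = lext G (tmap f f (D1 a))" using h by (simp add: coalg_hom_def)
  also have "\<dots> = lext (\<lambda>(a1,a2). lext (\<lambda>x1. lext (\<lambda>x2. G (x1, x2)) (f a2)) (f a1)) (D1 a)"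
    unfolding tmap_def by (subst lext_lext) (auto simp: f1 ff lext_tens split_beta intro!: lext_cong)
  finally show ?thesis .
qed

lemma hom_counit:
  assumes h: "coalg_hom D1 e1 D2 e2 f"
  shows "lext (\<lambda>x c. e2 x * H c) (f a) = (\<lambda>c. e1 a * H c)"
  using h by (simp add: lext_mult_lfun coalg_hom_def)

lemma tens_lext1: "tens (lext f x) y = lext (\<lambda>a. tens (f a) y) x"
  by (rule ext) (simp add: tens_def lext_def sum_distrib_right mult.assoc)

lemma tens_lext2: "tens x (lext g y) = lext (\<lambda>b. tens x (g b)) y"
  by (rule ext) (simp add: tens_def lext_def sum_distrib_left mult.left_commute)

definition PhiT :: "('a \<times> ('a \<times> 'a) \<Rightarrow> 'a \<Rightarrow> 'k::comm_ring_1) \<Rightarrow> 'a \<times> 'a \<Rightarrow> ('a \<Rightarrow> 'k) \<Rightarrow> 'a \<Rightarrow> 'k"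
  where "PhiT T w x = lext (\<lambda>a. T (a, w)) x"

lemma PhiT_bvec[simp]: "PhiT T w (bvec a) = T (a, w)"
  by (simp add: PhiT_def)

lemma op3_bvec[simp]: "op3 T (bvec (a::'a)) (bvec b) (bvec c) = (T (a, (b, c)) :: 'a \<Rightarrow> 'k::comm_ring_1)"
  by (simp add: op3_def)

lemma op2_bvec[simp]: "op2 L (bvec (a::'a)) (bvec b) = (L (a, b) :: 'a \<Rightarrow> 'k::comm_ring_1)"
  by (simp add: op2_def)

locale tshelf =
  fixes D :: "'a \<Rightarrow> 'a \<times> 'a \<Rightarrow> 'k::field" and e :: "'a \<Rightarrow> 'k"
    and T :: "'a \<times> ('a \<times> 'a) \<Rightarrow> 'a \<Rightarrow> 'k"
  assumes coal: "coalgebra D e" and cocom: "cocommutative D"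
    and tsh: "trilinear_shelf D e T"
begin

lemma hom: "coalg_hom (tcD D (tcD D D)) (tce e (tce e e)) D e T"
  using tsh by (simp add: trilinear_shelf_def)

abbreviation "DD \<equiv> tcD D D"
abbreviation "ee \<equiv> tce e e"
abbreviation "K \<equiv> lhdT D T"
abbreviation "Phi \<equiv> PhiT T"

lemma fD[simp]: "fsupp (D a)" using coal by (simp add: coalg_fsupp)
lemma fT[simp]: "fsupp (T x)" using hom unfolding coalg_hom_def linmap_def by blast
lemma fDD[simp]: "fsupp (DD w)" by (cases w) (simp add: fsupp_tcD)
lemma coalDD: "coalgebra DD ee" by (rule coalgebra_tcD[OF coal coal])
lemma cocomDD: "cocommutative DD" by (rule cocomm_tcD[OF cocom cocom])

lemma fPhi[simp]: "fsupp x \<Longrightarrow> fsupp (Phi w x)"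
  unfolding PhiT_def by (rule fsupp_lext) auto

lemma Phi_lext: "fsupp x \<Longrightarrow> (\<And>a. fsupp (f a)) \<Longrightarrow> Phi w (lext f x) = lext (\<lambda>a. Phi w (f a)) x"
  unfolding PhiT_def by (rule lext_lext) auto

lemma lext_DD: "lext F (DD (m, n)) = lext (\<lambda>(m1,m2). lext (\<lambda>(n1,n2). F ((m1,n1),(m2,n2))) (D n)) (D m)"
  by (simp add: lext_tcD)

lemma K_eq: "K ((u, v), w) = lext (\<lambda>(w1,w2). tens (T (u, w1)) (T (v, w2))) (DD w)"
proof -
  obtain m n where w: "w = (m, n)" by (cases w)
  show ?thesis
    unfolding w lhdT_def by (simp add: lext_DD lext_tens split_beta split_beta')
qed

lemma fK[simp]: "fsupp (K X)"
proof -
  obtain u v w where "X = ((u, v), w)" by (metis prod.collapse)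
  then show ?thesis by (auto simp: K_eq split_beta intro!: fsupp_lext)
qed

lemma Ktens:
  assumes "fsupp X" "fsupp Y"
  shows "lext (\<lambda>z. K (z, W)) (tens X Y) = lext (\<lambda>(w1,w2). tens (Phi w1 X) (Phi w2 Y)) (DD W)"
proof -
  have "lext (\<lambda>z. K (z, W)) (tens X Y)
      = lext (\<lambda>a. lext (\<lambda>b. lext (\<lambda>(w1,w2). tens (T (a, w1)) (T (b, w2))) (DD W)) Y) X"
    by (simp add: lext_tens assms K_eq)
  also have "\<dots> = lext (\<lambda>a. lext (\<lambda>(w1,w2). lext (\<lambda>b. tens (T (a, w1)) (T (b, w2))) Y) (DD W)) X"
    by (rule lext_cong2, simp only: split_beta', rule lext_swap2) (auto simp: assms)
  also have "\<dots> = lext (\<lambda>(w1,w2). lext (\<lambda>a. lext (\<lambda>b. tens (T (a, w1)) (T (b, w2))) Y) X) (DD W)"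
    by (simp only: split_beta', rule lext_swap2) (auto simp: assms )
  also have "\<dots> = lext (\<lambda>(w1,w2). tens (Phi w1 X) (Phi w2 Y)) (DD W)"
    by (rule lext_cong2) (auto simp: split_beta PhiT_def tens_lext1 tens_lext2 assms intro!: lext_swap2)
  finally show ?thesis .
qed

lemma hom_T:
  "lext (\<lambda>x. lext G (D x)) (T (a, w))
   = lext (\<lambda>(w1,w2). lext (\<lambda>(a1,a2). lext (\<lambda>x1. lext (\<lambda>x2. G (x1, x2)) (T (a2, w2))) (T (a1, w1))) (D a)) (DD w)"
proof -
  obtain m n where w: "w = (m, n)" by (cases w)
  have "lext (\<lambda>x. lext G (D x)) (T (a, w))
     = lext (\<lambda>(a1,a2). lext (\<lambda>(w1,w2). lext (\<lambda>x1. lext (\<lambda>x2. G (x1, x2)) (T (a2, w2))) (T (a1, w1))) (DD w)) (D a)"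
    unfolding w
    by (subst hom_L[OF hom]) (simp_all add: lext_tcD fsupp_tcD split_beta split_beta')
  also have "\<dots> = lext (\<lambda>(w1,w2). lext (\<lambda>(a1,a2). lext (\<lambda>x1. lext (\<lambda>x2. G (x1, x2)) (T (a2, w2))) (T (a1, w1))) (D a)) (DD w)"
    by (simp only: split_beta', rule lext_swap2) auto
  finally show ?thesis .
qed

end

context tshelf
begin

lemma hom_T':
  "lext (\<lambda>x. lext G (D x)) (T (a, w))
   = lext (\<lambda>(a1,a2). lext (\<lambda>(w1,w2). lext (\<lambda>x1. lext (\<lambda>x2. G (x1, x2)) (T (a2, w2))) (T (a1, w1))) (DD w)) (D a)"
proof -
  obtain m n where w: "w = (m, n)" by (cases w)
  show ?thesis
    unfolding w
    by (subst hom_L[OF hom]) (simp_all add: lext_tcD fsupp_tcD split_beta split_beta')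
qed

lemma hom_T2:
  "lext (\<lambda>x. lext (\<lambda>y. lext (\<lambda>(x1,x2). lext (\<lambda>(y1,y2). G x1 x2 y1 y2) (D y)) (D x)) (T (v, w2))) (T (u, w1))
 = lext (\<lambda>(u1,u2). lext (\<lambda>(v1,v2). lext (\<lambda>(w11,w12). lext (\<lambda>(w21,w22).
     lext (\<lambda>x1. lext (\<lambda>x2. lext (\<lambda>y1. lext (\<lambda>y2. G x1 x2 y1 y2) (T (v2, w22))) (T (v1, w21))) (T (u2, w12))) (T (u1, w11))
   ) (DD w2)) (DD w1)) (D v)) (D u)"
  (is "?L = ?R")
proof -
  have "?L = lext (\<lambda>x. lext (\<lambda>(x1,x2). lext (\<lambda>y. lext (\<lambda>(y1,y2). G x1 x2 y1 y2) (D y)) (T (v, w2))) (D x)) (T (u, w1))"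
    by (simp only: split_beta', (rule lext_cong2 lext_swap2)+) auto
  also have "\<dots> = lext (\<lambda>x. lext (\<lambda>(x1,x2). lext (\<lambda>(v1,v2). lext (\<lambda>(w21,w22).
     lext (\<lambda>y1. lext (\<lambda>y2. G x1 x2 y1 y2) (T (v2, w22))) (T (v1, w21))) (DD w2)) (D v)) (D x)) (T (u, w1))"
    by (simp only: hom_T' split_beta' fst_conv snd_conv)
  also have "\<dots> = lext (\<lambda>(u1,u2). lext (\<lambda>(w11,w12). lext (\<lambda>x1. lext (\<lambda>x2. lext (\<lambda>(v1,v2). lext (\<lambda>(w21,w22).
     lext (\<lambda>y1. lext (\<lambda>y2. G x1 x2 y1 y2) (T (v2, w22))) (T (v1, w21))) (DD w2)) (D v)) (T (u2, w12))) (T (u1, w11))) (DD w1)) (D u)"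
    by (simp only: hom_T' split_beta' fst_conv snd_conv)
  also have "\<dots> = lext (\<lambda>(u1,u2). lext (\<lambda>(w11,w12). lext (\<lambda>x1. lext (\<lambda>(v1,v2). lext (\<lambda>x2. lext (\<lambda>(w21,w22).
     lext (\<lambda>y1. lext (\<lambda>y2. G x1 x2 y1 y2) (T (v2, w22))) (T (v1, w21))) (DD w2)) (T (u2, w12))) (D v)) (T (u1, w11))) (DD w1)) (D u)"
    by (simp only: split_beta', (rule lext_cong2 lext_swap2)+) auto
  also have "\<dots> = lext (\<lambda>(u1,u2). lext (\<lambda>(w11,w12). lext (\<lambda>(v1,v2). lext (\<lambda>x1. lext (\<lambda>x2. lext (\<lambda>(w21,w22).
     lext (\<lambda>y1. lext (\<lambda>y2. G x1 x2 y1 y2) (T (v2, w22))) (T (v1, w21))) (DD w2)) (T (u2, w12))) (T (u1, w11))) (D v)) (DD w1)) (D u)"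
    by (simp only: split_beta', (rule lext_cong2 lext_swap2)+) auto
  also have "\<dots> = lext (\<lambda>(u1,u2). lext (\<lambda>(v1,v2). lext (\<lambda>(w11,w12). lext (\<lambda>x1. lext (\<lambda>x2. lext (\<lambda>(w21,w22).
     lext (\<lambda>y1. lext (\<lambda>y2. G x1 x2 y1 y2) (T (v2, w22))) (T (v1, w21))) (DD w2)) (T (u2, w12))) (T (u1, w11))) (DD w1)) (D v)) (D u)"
    by (simp only: split_beta', (rule lext_cong2 lext_swap2)+) auto
  also have "\<dots> = lext (\<lambda>(u1,u2). lext (\<lambda>(v1,v2). lext (\<lambda>(w11,w12). lext (\<lambda>x1. lext (\<lambda>(w21,w22). lext (\<lambda>x2.
     lext (\<lambda>y1. lext (\<lambda>y2. G x1 x2 y1 y2) (T (v2, w22))) (T (v1, w21))) (T (u2, w12))) (DD w2)) (T (u1, w11))) (DD w1)) (D v)) (D u)"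
    by (simp only: split_beta', (rule lext_cong2 lext_swap2)+) auto
  also have "\<dots> = ?R"
    by (simp only: split_beta', (rule lext_cong2 lext_swap2)+) auto
  finally show ?thesis .
qed

end

context tshelf
begin

lemma K_hom_cps:
  "lext (\<lambda>z. lext G (DD z)) (K ((u,v),W))
   = lext (\<lambda>(u1,u2). lext (\<lambda>(v1,v2). lext (\<lambda>(W1,W2).
        lext (\<lambda>z1. lext (\<lambda>z2. G (z1, z2)) (K ((u2,v2),W2))) (K ((u1,v1),W1))) (DD W)) (D v)) (D u)"
  (is "?L = ?R")
proof -
  have "?L = lext (\<lambda>(w1,w2). lext (\<lambda>x. lext (\<lambda>y. lext (\<lambda>(x1,x2). lext (\<lambda>(y1,y2).
        G ((x1,y1),(x2,y2))) (D y)) (D x)) (T (v, w2))) (T (u, w1))) (DD W)"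
    by (simp add: K_eq lext_lext lext_tens lext_DD split_beta split_beta')
  also have "\<dots> = lext (\<lambda>(w1,w2). lext (\<lambda>(u1,u2). lext (\<lambda>(v1,v2). lext (\<lambda>(w11,w12). lext (\<lambda>(w21,w22).
     lext (\<lambda>x1. lext (\<lambda>x2. lext (\<lambda>y1. lext (\<lambda>y2. G ((x1,y1),(x2,y2))) (T (v2, w22))) (T (v1, w21))) (T (u2, w12))) (T (u1, w11))
   ) (DD w2)) (DD w1)) (D v)) (D u)) (DD W)"
    by (simp only: hom_T2)
  also have "\<dots> = lext (\<lambda>(u1,u2). lext (\<lambda>(w1,w2). lext (\<lambda>(v1,v2). lext (\<lambda>(w11,w12). lext (\<lambda>(w21,w22).
     lext (\<lambda>x1. lext (\<lambda>x2. lext (\<lambda>y1. lext (\<lambda>y2. G ((x1,y1),(x2,y2))) (T (v2, w22))) (T (v1, w21))) (T (u2, w12))) (T (u1, w11))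
   ) (DD w2)) (DD w1)) (D v)) (DD W)) (D u)"
    by (simp only: split_beta', (rule lext_cong2 lext_swap2)+) auto
  also have "\<dots> = lext (\<lambda>(u1,u2). lext (\<lambda>(v1,v2). lext (\<lambda>(w1,w2). lext (\<lambda>(w11,w12). lext (\<lambda>(w21,w22).
     lext (\<lambda>x1. lext (\<lambda>x2. lext (\<lambda>y1. lext (\<lambda>y2. G ((x1,y1),(x2,y2))) (T (v2, w22))) (T (v1, w21))) (T (u2, w12))) (T (u1, w11))
   ) (DD w2)) (DD w1)) (DD W)) (D v)) (D u)"
    by (simp only: split_beta', (rule lext_cong2 lext_swap2)+) auto
  also have "\<dots> = lext (\<lambda>(u1,u2). lext (\<lambda>(v1,v2). lext (\<lambda>(w1,w2). lext (\<lambda>(a,b). lext (\<lambda>(c,d).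
     lext (\<lambda>x1. lext (\<lambda>x2. lext (\<lambda>y1. lext (\<lambda>y2. G ((x1,y1),(x2,y2))) (T (v2, d))) (T (v1, b))) (T (u2, c))) (T (u1, a))
   ) (DD w2)) (DD w1)) (DD W)) (D v)) (D u)"
    by (subst middle_swap[OF coalDD cocomDD]) (rule refl)
  also have "\<dots> = lext (\<lambda>(u1,u2). lext (\<lambda>(v1,v2). lext (\<lambda>(w1,w2). lext (\<lambda>(a,b). lext (\<lambda>(c,d).
     lext (\<lambda>x1. lext (\<lambda>y1. lext (\<lambda>x2. lext (\<lambda>y2. G ((x1,y1),(x2,y2))) (T (v2, d))) (T (u2, c))) (T (v1, b))) (T (u1, a))
   ) (DD w2)) (DD w1)) (DD W)) (D v)) (D u)"
    by (simp only: split_beta', (rule lext_cong2 lext_swap2)+) auto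
  also have "\<dots> = lext (\<lambda>(u1,u2). lext (\<lambda>(v1,v2). lext (\<lambda>(w1,w2). lext (\<lambda>(a,b).
     lext (\<lambda>x1. lext (\<lambda>(c,d). lext (\<lambda>y1. lext (\<lambda>x2. lext (\<lambda>y2. G ((x1,y1),(x2,y2))) (T (v2, d))) (T (u2, c))) (T (v1, b))) (DD w2)) (T (u1, a))
   ) (DD w1)) (DD W)) (D v)) (D u)"
    by (simp only: split_beta', (rule lext_cong2 lext_swap2)+) auto
  also have "\<dots> = lext (\<lambda>(u1,u2). lext (\<lambda>(v1,v2). lext (\<lambda>(w1,w2). lext (\<lambda>(a,b).
     lext (\<lambda>x1. lext (\<lambda>y1. lext (\<lambda>(c,d). lext (\<lambda>x2. lext (\<lambda>y2. G ((x1,y1),(x2,y2))) (T (v2, d))) (T (u2, c))) (DD w2)) (T (v1, b))) (T (u1, a))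
   ) (DD w1)) (DD W)) (D v)) (D u)"
    by (simp only: split_beta', (rule lext_cong2 lext_swap2)+) auto
  also have "\<dots> = ?R"
    by (simp add: K_eq lext_lext lext_tens split_beta split_beta')
  finally show ?thesis .
qed

end

lemma lfun_comp:
  assumes "fsupp v" "\<And>a. fsupp (g a)"
  shows "lfun f (lext g v) = lfun (\<lambda>a. lfun f (g a)) v"
  unfolding lfun_lext by (subst lext_lext[OF assms]) (rule lext_point_eq, simp)

lemma lfun_tens:
  assumes "fsupp (A::'a \<Rightarrow> 'k::field)" "fsupp (B::'b \<Rightarrow> 'k)"
  shows "lfun (tce e1 e2) (tens A B) = lfun e1 A * lfun e2 B"
  unfolding lfun_lext tce_def
  by (subst lext_tens[OF assms]) (simp add: lext_def sum_distrib_left sum_distrib_right mult_ac sum.swap[of _ "{a. B a \<noteq> 0}"])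

lemma coalg_counit_scalar:
  fixes D :: "'a \<Rightarrow> 'a \<times> 'a \<Rightarrow> 'k::field"
  assumes "coalgebra D e"
  shows "lfun (\<lambda>(p,q). e p * h q) (D w) = h w"
proof -
  have "lext (\<lambda>(p,q) (c::unit). e p * h q) (D w) = (\<lambda>_. h w)"
    using coalg_counitL[OF assms, of "\<lambda>q (_::unit). h q" w] by (simp add: split_beta')
  then show ?thesis unfolding lfun_lext by (simp add: split_beta' fun_eq_iff)
qed

context tshelf
begin

lemma lfun_T: "lfun e (T x) = tce e (tce e e) x"
  using hom unfolding coalg_hom_def by (metis prod.collapse)

lemma K_coalg_hom: "coalg_hom (tcD DD DD) (tce ee ee) DD ee K"
  unfolding coalg_hom_def
proof (intro conjI allI)
  show "linmap K" by (simp add: linmap_def)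
next
  fix X :: "('a \<times> 'a) \<times> ('a \<times> 'a)"
  obtain u v W where X: "X = ((u,v),W)" by (metis prod.collapse)
  have "lext DD (K X) = lext (\<lambda>z. lext bvec (DD z)) (K X)"
    by (simp add: lext_bvec_id)
  also have "\<dots> = lext (\<lambda>(u1,u2). lext (\<lambda>(v1,v2). lext (\<lambda>(W1,W2).
        lext (\<lambda>z1. lext (\<lambda>z2. bvec (z1, z2)) (K ((u2,v2),W2))) (K ((u1,v1),W1))) (DD W)) (D v)) (D u)"
    unfolding X by (rule K_hom_cps)
  also have "\<dots> = lext (\<lambda>(u1,u2). lext (\<lambda>(v1,v2). lext (\<lambda>(W1,W2).
        tens (K ((u1,v1),W1)) (K ((u2,v2),W2))) (DD W)) (D v)) (D u)"
    by (simp add: lext_tens[symmetric] lext_bvec_id split_beta')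
  also have "\<dots> = tmap K K (tcD DD DD X)"
    unfolding X tmap_def
    by (simp add: lext_tcD fsupp_tcD split_beta' lext_DD)
  finally show "lext DD (K X) = tmap K K (tcD DD DD X)" .
next
  fix X :: "('a \<times> 'a) \<times> ('a \<times> 'a)"
  obtain u v W where X: "X = ((u,v),W)" by (metis prod.collapse)
  have "lfun ee (K X) = lfun (\<lambda>(w1,w2). lfun ee (tens (T (u, w1)) (T (v, w2)))) (DD W)"
    unfolding X K_eq by (subst lfun_comp) (auto simp: split_beta')
  also have "\<dots> = lfun (\<lambda>(w1,w2). ee w1 * (e u * e v * ee w2)) (DD W)"
    by (simp only: lfun_tens fT lfun_T split_beta') (simp add: tce_def split_beta mult_ac)
  also have "\<dots> = e u * e v * ee W"
    by (rule coalg_counit_scalar[OF coalDD])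
  also have "\<dots> = tce ee ee X" by (simp add: X tce_def)
  finally show "lfun ee (K X) = tce ee ee X" .
qed

end

lemma op2_expand:
  assumes "fsupp (x::'b \<Rightarrow> 'k::field)" "fsupp y"
  shows "op2 K x y = lext (\<lambda>a. lext (\<lambda>b. K (a, b)) y) x"
  unfolding op2_def by (rule lext_tens[OF assms])

lemma op2_lext1:
  fixes K :: "'b \<times> 'b \<Rightarrow> 'b \<Rightarrow> 'k::field"
  assumes "\<And>z. fsupp (K z)" "fsupp x" "fsupp y" "\<And>a. fsupp (f a)"
  shows "op2 K (lext f x) y = lext (\<lambda>a. op2 K (f a) y) x"
  using assms by (simp add: op2_expand fsupp_lext lext_lext)

lemma op2_lext2:
  fixes K :: "'b \<times> 'b \<Rightarrow> 'b \<Rightarrow> 'k::field"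
  assumes "\<And>z. fsupp (K z)" "fsupp x" "fsupp y" "\<And>a. fsupp (f a)"
  shows "op2 K x (lext f y) = lext (\<lambda>b. op2 K x (f b)) y"
proof -
  have "op2 K x (lext f y) = lext (\<lambda>a. lext (\<lambda>b. lext (\<lambda>b'. K (a, b')) (f b)) y) x"
    using assms by (simp add: op2_expand fsupp_lext lext_lext)
  also have "\<dots> = lext (\<lambda>b. lext (\<lambda>a. lext (\<lambda>b'. K (a, b')) (f b)) x) y"
    using assms by (intro lext_swap2) auto
  also have "\<dots> = lext (\<lambda>b. op2 K x (f b)) y"
    using assms by (simp add: op2_expand)
  finally show ?thesis .
qed

lemma fsupp_op2:
  fixes K :: "'b \<times> 'b \<Rightarrow> 'b \<Rightarrow> 'k::field"
  assumes "\<And>z. fsupp (K z)" "fsupp x" "fsupp y"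
  shows "fsupp (op2 K x y)"
  unfolding op2_def using assms by (intro fsupp_lext) auto

lemma shelf_reduce:
  fixes K :: "'b \<times> 'b \<Rightarrow> 'b \<Rightarrow> 'k::field" and DD :: "'b \<Rightarrow> 'b \<times> 'b \<Rightarrow> 'k"
  assumes fK: "\<And>x. fsupp (K x)" and fD: "\<And>x. fsupp (DD x)"
  and basis: "\<And>a b c. lext (\<lambda>z. K (z, c)) (K (a, b)) = lext (\<lambda>(p,q). op2 K (K (a, p)) (K (b, q))) (DD c)"
  and u: "fsupp u" and v: "fsupp v" and w: "fsupp w"
  shows "op2 K (op2 K u v) w = lext (\<lambda>(p,q). op2 K (op2 K u (bvec p)) (op2 K v (bvec q))) (lext DD w)"
proof -
  have "op2 K (op2 K u v) w = lext (\<lambda>z. lext (\<lambda>c. K (z, c)) w) (lext (\<lambda>a. lext (\<lambda>b. K (a, b)) v) u)"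
  proof -
    have fuv: "fsupp (op2 K u v)" using u v fK by (simp add: fsupp_op2)
    show ?thesis by (subst op2_expand[OF fuv w]) (simp only: op2_expand[OF u v])
  qed
  also have "\<dots> = lext (\<lambda>a. lext (\<lambda>b. lext (\<lambda>z. lext (\<lambda>c. K (z, c)) w) (K (a, b))) v) u"
    using u v w fK by (simp add: lext_lext fsupp_lext)
  also have "\<dots> = lext (\<lambda>a. lext (\<lambda>b. lext (\<lambda>c. lext (\<lambda>z. K (z, c)) (K (a, b))) w) v) u"
    using u v w fK by (intro lext_cong2 lext_swap2) auto
  also have "\<dots> = lext (\<lambda>a. lext (\<lambda>b. lext (\<lambda>c. lext (\<lambda>(p,q). op2 K (K (a, p)) (K (b, q))) (DD c)) w) v) u"
    by (simp only: basis)
  also have "\<dots> = lext (\<lambda>a. lext (\<lambda>c. lext (\<lambda>b. lext (\<lambda>(p,q). op2 K (K (a, p)) (K (b, q))) (DD c)) v) w) u"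
    by (simp only: split_beta', (rule lext_cong2 lext_swap2)+) (auto simp: u v w fK fD)
  also have "\<dots> = lext (\<lambda>c. lext (\<lambda>a. lext (\<lambda>b. lext (\<lambda>(p,q). op2 K (K (a, p)) (K (b, q))) (DD c)) v) u) w"
    by (simp only: split_beta', (rule lext_cong2 lext_swap2)+) (auto simp: u v w fK fD)
  also have "\<dots> = lext (\<lambda>c. lext (\<lambda>a. lext (\<lambda>(p,q). lext (\<lambda>b. op2 K (K (a, p)) (K (b, q))) v) (DD c)) u) w"
    by (simp only: split_beta', (rule lext_cong2 lext_swap2)+) (auto simp: u v w fK fD)
  also have "\<dots> = lext (\<lambda>c. lext (\<lambda>(p,q). lext (\<lambda>a. lext (\<lambda>b. op2 K (K (a, p)) (K (b, q))) v) u) (DD c)) w"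
    by (simp only: split_beta', (rule lext_cong2 lext_swap2)+) (auto simp: u v w fK fD)
  also have "\<dots> = lext (\<lambda>c. lext (\<lambda>(p,q). op2 K (op2 K u (bvec p)) (op2 K v (bvec q))) (DD c)) w"
  proof (rule lext_cong2, rule lext_cong2, clarify)
    fix c p q
    have "op2 K (op2 K u (bvec p)) (op2 K v (bvec q))
        = op2 K (lext (\<lambda>a. K (a, p)) u) (lext (\<lambda>b. K (b, q)) v)"
      using u v by (simp add: op2_expand)
    also have "\<dots> = lext (\<lambda>a. lext (\<lambda>b. op2 K (K (a, p)) (K (b, q))) v) u"
      using u v fK by (simp add: op2_lext1 op2_lext2 fsupp_lext) (rule lext_swap2[symmetric]; simp add: u v)
    finally show "lext (\<lambda>a. lext (\<lambda>b. op2 K (K (a, p)) (K (b, q))) v) u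
       = op2 K (op2 K u (bvec p)) (op2 K v (bvec q))" by simp
  qed
  also have "\<dots> = lext (\<lambda>(p,q). op2 K (op2 K u (bvec p)) (op2 K v (bvec q))) (lext DD w)"
    using w fD by (simp add: lext_lext)
  finally show ?thesis .
qed

definition PhiLT :: "('a \<times> ('a \<times> 'a) \<Rightarrow> 'a \<Rightarrow> 'k::comm_ring_1) \<Rightarrow> ('a \<times> 'a \<Rightarrow> 'k) \<Rightarrow> ('a \<Rightarrow> 'k) \<Rightarrow> 'a \<Rightarrow> 'k"
  where "PhiLT T Y x = lext (\<lambda>y. PhiT T y x) Y"

context tshelf
begin

abbreviation "PhiL \<equiv> PhiLT T"

lemma op3_bvec23: "fsupp x \<Longrightarrow> op3 T x (bvec p) (bvec q) = Phi (p, q) x"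
  by (simp add: op3_def lext_tens PhiT_def)

lemma PhiL_lext: "fsupp Y \<Longrightarrow> (\<And>y. fsupp (f y)) \<Longrightarrow> PhiL (lext f Y) x = lext (\<lambda>y. PhiL (f y) x) Y"
  unfolding PhiLT_def by (rule lext_lext) auto

lemma PhiL_tens: "fsupp A \<Longrightarrow> fsupp B \<Longrightarrow> fsupp x \<Longrightarrow> PhiL (tens A B) x = op3 T x A B"
  unfolding PhiLT_def PhiT_def op3_def
  by (subst (2) lext_tens) (auto intro: lext_swap2)

lemma shelf_T:
  assumes "fsupp x" "fsupp y" "fsupp z" "fsupp u" "fsupp v"
  shows "op3 T (op3 T x y z) u v
          = lext (\<lambda>((p1, (p2, p3)), (q1, (q2, q3))).
                    op3 T (op3 T x (bvec p1) (bvec q1)) (op3 T y (bvec p2) (bvec q2))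
                          (op3 T z (bvec p3) (bvec q3)))
                 (tens (Delta2 D u) (Delta2 D v))"
  using tsh assms unfolding trilinear_shelf_def by blast

lemma lext_Delta2_bvec:
  "lext F (Delta2 D (bvec p)) = lext (\<lambda>(p1,p'). lext (\<lambda>(p2,p3). F (p1, (p2, p3))) (D p')) (D p)"
  unfolding Delta2_def by (simp add: tmap_bvec_D split_beta')

lemma fDelta2[simp]: "fsupp (Delta2 D (bvec p))"
  unfolding Delta2_def by (simp add: fsupp_tmap)

lemma Phi_star:
  "Phi (p, q) (T (a, (m, n))) = lext (\<lambda>(w1,w2). PhiL (K ((m,n),w2)) (T (a, w1))) (DD (p, q))"
proof -
  have "Phi (p, q) (T (a, (m, n))) = op3 T (op3 T (bvec a) (bvec m) (bvec n)) (bvec p) (bvec q)"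
    by (simp add: op3_bvec23)
  also have "\<dots> = lext (\<lambda>(p1,p'). lext (\<lambda>(p2,p3). lext (\<lambda>(q1,q'). lext (\<lambda>(q2,q3).
      op3 T (T (a, (p1, q1))) (T (m, (p2, q2))) (T (n, (p3, q3)))) (D q')) (D q)) (D p')) (D p)"
    by (subst shelf_T) (simp_all add: lext_tens lext_Delta2_bvec split_beta split_beta')
  also have "\<dots> = lext (\<lambda>(p1,p'). lext (\<lambda>(q1,q'). lext (\<lambda>(p2,p3). lext (\<lambda>(q2,q3).
      op3 T (T (a, (p1, q1))) (T (m, (p2, q2))) (T (n, (p3, q3)))) (D q')) (D p')) (D q)) (D p)"
    by (simp only: split_beta', (rule lext_cong2 lext_swap2)+) auto
  also have "\<dots> = lext (\<lambda>(w1,w2). PhiL (K ((m,n),w2)) (T (a, w1))) (DD (p, q))"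
    by (simp add: lext_DD K_eq PhiL_lext PhiL_tens split_beta split_beta')
  finally show ?thesis .
qed

lemma Phi_star':
  "Phi w (T (a, V)) = lext (\<lambda>(w1,w2). PhiL (K (V,w2)) (T (a, w1))) (DD w)"
  using Phi_star[of "fst w" "snd w" a "fst V" "snd V"] by simp

lemma K_hom_cps':
  "lext (\<lambda>z. lext G (DD z)) (K (U,W))
   = lext (\<lambda>(U1,U2). lext (\<lambda>(W1,W2).
        lext (\<lambda>z1. lext (\<lambda>z2. G (z1, z2)) (K (U2,W2))) (K (U1,W1))) (DD W)) (DD U)"
proof -
  obtain u v where U: "U = (u, v)" by (cases U)
  show ?thesis unfolding U K_hom_cps by (simp add: lext_DD split_beta')
qed

lemma op2_swap_form:
  "fsupp X \<Longrightarrow> fsupp Z \<Longrightarrow> op2 K X Z = lext (\<lambda>z. lext (\<lambda>x. K (x, z)) X) Z"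
  by (simp add: op2_expand) (rule lext_swap2; simp)

lemma K_shelf_basis:
  "lext (\<lambda>z. K (z, W)) (K (U, V)) = lext (\<lambda>(p,q). op2 K (K (U, p)) (K (V, q))) (DD W)"
proof -
  obtain u v where U: "U = (u, v)" by (cases U)
  have "lext (\<lambda>z. K (z, W)) (K (U, V))
     = lext (\<lambda>(v1,v2). lext (\<lambda>z. K (z, W)) (tens (T (u, v1)) (T (v, v2)))) (DD V)"
    unfolding U K_eq by (subst lext_lext) (auto simp: split_beta')
  also have "\<dots> = lext (\<lambda>(v1,v2). lext (\<lambda>(w1,w2). tens (Phi w1 (T (u, v1))) (Phi w2 (T (v, v2)))) (DD W)) (DD V)"
    by (simp add: Ktens split_beta')
  also have "\<dots> = lext (\<lambda>(v1,v2). lext (\<lambda>(w1,w2). lext (\<lambda>(a,b). lext (\<lambda>(c,d).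
       tens (PhiL (K (v1,b)) (T (u, a))) (PhiL (K (v2,d)) (T (v, c)))) (DD w2)) (DD w1)) (DD W)) (DD V)"
    by (simp only: Phi_star' tens_lext1 tens_lext2 split_beta', (rule lext_cong2 lext_swap2)+) auto
  also have "\<dots> = lext (\<lambda>(v1,v2). lext (\<lambda>(w1,w2). lext (\<lambda>(a,b). lext (\<lambda>(c,d).
       tens (PhiL (K (v1,c)) (T (u, a))) (PhiL (K (v2,d)) (T (v, b)))) (DD w2)) (DD w1)) (DD W)) (DD V)"
    by (subst middle_swap[OF coalDD cocomDD]) (rule refl)
  also have "\<dots> = lext (\<lambda>(p,q). lext (\<lambda>(v1,v2). lext (\<lambda>(a,b). lext (\<lambda>(c,d).
       tens (PhiL (K (v1,c)) (T (u, a))) (PhiL (K (v2,d)) (T (v, b)))) (DD q)) (DD p)) (DD V)) (DD W)"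
    by (simp only: split_beta', rule lext_swap2) auto
  also have "\<dots> = lext (\<lambda>(p,q). lext (\<lambda>(v1,v2). lext (\<lambda>(a,b). lext (\<lambda>(c,d).
       lext (\<lambda>y1. lext (\<lambda>y2. tens (Phi y1 (T (u, a))) (Phi y2 (T (v, b)))) (K (v2,d))) (K (v1,c))) (DD q)) (DD p)) (DD V)) (DD W)"
    by (simp only: PhiLT_def tens_lext1 tens_lext2 split_beta', (rule lext_cong2 lext_swap2)+) auto
  also have "\<dots> = lext (\<lambda>(p,q). lext (\<lambda>(v1,v2). lext (\<lambda>(c,d). lext (\<lambda>(a,b).
       lext (\<lambda>y1. lext (\<lambda>y2. tens (Phi y1 (T (u, a))) (Phi y2 (T (v, b)))) (K (v2,d))) (K (v1,c))) (DD p)) (DD q)) (DD V)) (DD W)"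
    by (simp only: split_beta', (rule lext_cong2 lext_swap2)+) auto
  also have "\<dots> = lext (\<lambda>(p,q). lext (\<lambda>(v1,v2). lext (\<lambda>(c,d). lext (\<lambda>y1. lext (\<lambda>(a,b).
       lext (\<lambda>y2. tens (Phi y1 (T (u, a))) (Phi y2 (T (v, b)))) (K (v2,d))) (DD p)) (K (v1,c))) (DD q)) (DD V)) (DD W)"
    by (simp only: split_beta', (rule lext_cong2 lext_swap2)+) auto
  also have "\<dots> = lext (\<lambda>(p,q). lext (\<lambda>(v1,v2). lext (\<lambda>(c,d). lext (\<lambda>y1. lext (\<lambda>y2. lext (\<lambda>(a,b).
       tens (Phi y1 (T (u, a))) (Phi y2 (T (v, b)))) (DD p)) (K (v2,d))) (K (v1,c))) (DD q)) (DD V)) (DD W)"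
    by (simp only: split_beta', (rule lext_cong2 lext_swap2)+) auto
  also have "\<dots> = lext (\<lambda>(p,q). lext (\<lambda>z. lext (\<lambda>(y1,y2). lext (\<lambda>(a,b).
       tens (Phi y1 (T (u, a))) (Phi y2 (T (v, b)))) (DD p)) (DD z)) (K (V, q))) (DD W)"
    by (simp only: K_hom_cps' split_beta' fst_conv snd_conv)
  also have "\<dots> = lext (\<lambda>(p,q). lext (\<lambda>z. lext (\<lambda>(a,b). lext (\<lambda>(y1,y2).
       tens (Phi y1 (T (u, a))) (Phi y2 (T (v, b)))) (DD z)) (DD p)) (K (V, q))) (DD W)"
    by (simp only: split_beta', (rule lext_cong2 lext_swap2)+) auto
  also have "\<dots> = lext (\<lambda>(p,q). lext (\<lambda>z. lext (\<lambda>x. K (x, z)) (K (U, p))) (K (V, q))) (DD W)"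
    unfolding U K_eq by (subst lext_lext) (auto simp: split_beta' Ktens)
  also have "\<dots> = lext (\<lambda>(p,q). op2 K (K (U, p)) (K (V, q))) (DD W)"
    by (simp add: op2_swap_form split_beta')
  finally show ?thesis .
qed

lemma K_linear_shelf: "linear_shelf DD ee K"
  unfolding linear_shelf_def
proof (intro conjI allI impI)
  show "coalgebra DD ee" by (rule coalDD)
  show "coalg_hom (tcD DD DD) (tce ee ee) DD ee K" by (rule K_coalg_hom)
  fix u v w :: "'a \<times> 'a \<Rightarrow> 'k"
  assume "fsupp u" "fsupp v" "fsupp w"
  then show "op2 K (op2 K u v) w = lext (\<lambda>(p, q). op2 K (op2 K u (bvec p)) (op2 K v (bvec q))) (lext DD w)"
    by (intro shelf_reduce[where DD=DD]) (auto simp: K_shelf_basis)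
qed

end

definition swapT :: "('a \<times> ('a \<times> 'a) \<Rightarrow> 'b) \<Rightarrow> 'a \<times> ('a \<times> 'a) \<Rightarrow> 'b"
  where "swapT T = (\<lambda>(a, (b, c)). T (a, (c, b)))"

lemma swapT_app[simp]: "swapT T (a, (b, c)) = T (a, (c, b))"
  by (simp add: swapT_def)

lemma op3_expand:
  assumes "fsupp (x::'a \<Rightarrow> 'k::field)" "fsupp y" "fsupp z"
  shows "op3 T x y z = lext (\<lambda>a. lext (\<lambda>b. lext (\<lambda>c. T (a, (b, c))) z) y) x"
  unfolding op3_def using assms by (simp add: lext_tens)

lemma op3_swapT:
  assumes "fsupp (x::'a \<Rightarrow> 'k::field)" "fsupp y" "fsupp z"
  shows "op3 (swapT T) x y z = op3 T x z y"
  using assms by (simp add: op3_expand) (rule lext_cong2, rule lext_swap2; simp)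

lemma op3_bvec23_gen: "fsupp (x::'a \<Rightarrow> 'k::field) \<Longrightarrow> op3 T x (bvec p) (bvec q) = PhiT T (p, q) x"
  by (simp add: op3_def lext_tens PhiT_def)

lemma lext_Delta2:
  fixes D :: "'a \<Rightarrow> 'a \<times> 'a \<Rightarrow> 'k::field"
  assumes "\<And>a. fsupp (D a)" "fsupp u"
  shows "lext F (Delta2 D u) = lext (\<lambda>w. lext (\<lambda>(p1,p'). lext (\<lambda>(p2,p3). F (p1, (p2, p3))) (D p')) (D w)) u"
proof -
  have "fsupp (lext D u)" using assms by (intro fsupp_lext) auto
  then show ?thesis
    unfolding Delta2_def using assms by (simp add: tmap_bvec_D lext_lext split_beta')
qed

lemma fsupp_Delta2:
  fixes D :: "'a \<Rightarrow> 'a \<times> 'a \<Rightarrow> 'k::field"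
  assumes "\<And>a. fsupp (D a)" "fsupp u"
  shows "fsupp (Delta2 D u)"
proof -
  have "fsupp (lext D u)" using assms by (intro fsupp_lext) auto
  then show ?thesis unfolding Delta2_def using assms by (simp add: fsupp_tmap)
qed

lemma Delta2_swap:
  fixes D :: "'a \<Rightarrow> 'a \<times> 'a \<Rightarrow> 'k::field"
  assumes "\<And>a. fsupp (D a)" "fsupp u" "cocommutative D"
  shows "lext F (Delta2 D u) = lext (\<lambda>(p1, (p2, p3)). F (p1, (p3, p2))) (Delta2 D u)"
proof -
  have sw: "\<And>p1 p'. lext (\<lambda>(p2,p3). F (p1,(p2,p3))) (D p') = lext (\<lambda>(p2,p3). F (p1,(p3,p2))) (D p')"
    by (rule cocomm_swap[OF assms(3)])
  show ?thesis unfolding lext_Delta2[OF assms(1,2)] by (simp only: sw) (simp add: split_beta)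
qed

lemma trilinear_shelf_swapT:
  fixes D :: "'a \<Rightarrow> 'a \<times> 'a \<Rightarrow> 'k::field"
  assumes cc: "cocommutative D" and ts: "trilinear_shelf D e T"
  shows "trilinear_shelf D e (swapT T)"
proof -
  have coal: "coalgebra D e" using ts by (simp add: trilinear_shelf_def)
  have fD: "\<And>a. fsupp (D a)" using coal by (simp add: coalg_fsupp)
  have hom: "coalg_hom (tcD D (tcD D D)) (tce e (tce e e)) D e T" using ts by (simp add: trilinear_shelf_def)
  have fT: "\<And>x. fsupp (T x)" using hom unfolding coalg_hom_def linmap_def by blast
  have fT2: "\<And>x. fsupp (swapT T x)" by (simp add: swapT_def split_beta fT)
  have shT: "\<And>x y z u v. fsupp x \<Longrightarrow> fsupp y \<Longrightarrow> fsupp z \<Longrightarrow> fsupp u \<Longrightarrow> fsupp v \<Longrightarrow>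
          op3 T (op3 T x y z) u v
          = lext (\<lambda>((p1, (p2, p3)), (q1, (q2, q3))).
                    op3 T (op3 T x (bvec p1) (bvec q1)) (op3 T y (bvec p2) (bvec q2))
                          (op3 T z (bvec p3) (bvec q3)))
                 (tens (Delta2 D u) (Delta2 D v))"
    using ts unfolding trilinear_shelf_def by blast
  have fop3: "\<And>(T::'a \<times> ('a \<times> 'a) \<Rightarrow> 'a \<Rightarrow> 'k) (x::'a \<Rightarrow> 'k) y z. (\<And>w. fsupp (T w)) \<Longrightarrow> fsupp x \<Longrightarrow> fsupp y \<Longrightarrow> fsupp z \<Longrightarrow> fsupp (op3 T x y z)"
    unfolding op3_def by (intro fsupp_lext) auto
  have hom2: "coalg_hom (tcD D (tcD D D)) (tce e (tce e e)) D e (swapT T)"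
    unfolding coalg_hom_def
  proof (intro conjI allI)
    show "linmap (swapT T)" by (simp add: linmap_def fT2)
  next
    fix X :: "'a \<times> 'a \<times> 'a"
    obtain a b c where X: "X = (a, (b, c))" by (metis prod.collapse)
    have "lext D (swapT T X) = tmap T T (tcD D (tcD D D) (a, (c, b)))"
      using hom unfolding X coalg_hom_def by simp
    also have "\<dots> = lext (\<lambda>(a1,a2). lext (\<lambda>(c1,c2). lext (\<lambda>(b1,b2).
         tens (T (a1, (c1, b1))) (T (a2, (c2, b2)))) (D b)) (D c)) (D a)"
      unfolding tmap_def by (simp add: lext_tcD fsupp_tcD fD split_beta')
    also have "\<dots> = lext (\<lambda>(a1,a2). lext (\<lambda>(b1,b2). lext (\<lambda>(c1,c2).
         tens (T (a1, (c1, b1))) (T (a2, (c2, b2)))) (D c)) (D b)) (D a)"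
      by (simp only: split_beta', (rule lext_cong2 lext_swap2)+) (auto simp: fD)
    also have "\<dots> = tmap (swapT T) (swapT T) (tcD D (tcD D D) X)"
      unfolding tmap_def X by (simp add: lext_tcD fsupp_tcD fD split_beta')
    finally show "lext D (swapT T X) = tmap (swapT T) (swapT T) (tcD D (tcD D D) X)" .
  next
    fix X :: "'a \<times> 'a \<times> 'a"
    obtain a b c where X: "X = (a, (b, c))" by (metis prod.collapse)
    show "lfun e (swapT T X) = tce e (tce e e) X"
      using hom unfolding X coalg_hom_def by (simp add: tce_def mult_ac)
  qed
  show ?thesis
    unfolding trilinear_shelf_def
  proof (intro conjI allI impI)
    show "coalgebra D e" by (rule coal)
    show "coalg_hom (tcD D (tcD D D)) (tce e (tce e e)) D e (swapT T)" by (rule hom2)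
    fix x y z u v :: "'a \<Rightarrow> 'k"
    assume fx: "fsupp x" and fy: "fsupp y" and fz: "fsupp z" and fu: "fsupp u" and fv: "fsupp v"
    let ?F = "\<lambda>((p1, (p2, p3)), (q1, (q2, q3))).
                    op3 T (op3 T x (bvec p1) (bvec q1)) (op3 T z (bvec p2) (bvec q2))
                          (op3 T y (bvec p3) (bvec q3))"
    have "op3 (swapT T) (op3 (swapT T) x y z) u v = op3 T (op3 T x z y) v u"
      using fx fy fz fu fv fT by (simp add: op3_swapT fop3)
    also have "\<dots> = lext ?F (tens (Delta2 D v) (Delta2 D u))"
      by (rule shT) (auto simp: fx fy fz fu fv)
    also have "\<dots> = lext (\<lambda>P. lext (\<lambda>Q. ?F (P, Q)) (Delta2 D u)) (Delta2 D v)"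
      by (simp add: lext_tens fsupp_Delta2 fD fu fv)
    also have "\<dots> = lext (\<lambda>Q. lext (\<lambda>P. ?F (P, Q)) (Delta2 D v)) (Delta2 D u)"
      by (rule lext_swap2) (simp_all add: fsupp_Delta2 fD fu fv)
    also have "\<dots> = lext (\<lambda>(q1,(q2,q3)). lext (\<lambda>(p1,(p2,p3)). ?F ((p1,(p3,p2)), (q1,(q3,q2)))) (Delta2 D v)) (Delta2 D u)"
      by (subst Delta2_swap[OF fD fu cc], rule lext_cong2, simp only: split_beta',
          subst Delta2_swap[OF fD fv cc], simp add: split_beta')
    also have "\<dots> = lext (\<lambda>((p1, (p2, p3)), (q1, (q2, q3))).
          op3 (swapT T) (op3 (swapT T) x (bvec p1) (bvec q1)) (op3 (swapT T) y (bvec p2) (bvec q2))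
                          (op3 (swapT T) z (bvec p3) (bvec q3))) (tens (Delta2 D u) (Delta2 D v))"
      by (simp add: lext_tens fsupp_Delta2 fD fu fv split_beta' op3_swapT fx fy fz fop3 fT)
    finally show "op3 (swapT T) (op3 (swapT T) x y z) u v = lext (\<lambda>((p1, (p2, p3)), (q1, (q2, q3))).
          op3 (swapT T) (op3 (swapT T) x (bvec p1) (bvec q1)) (op3 (swapT T) y (bvec p2) (bvec q2))
                          (op3 (swapT T) z (bvec p3) (bvec q3))) (tens (Delta2 D u) (Delta2 D v))" .
  qed
qed

lemma op2_bvec2: "fsupp (X::'b \<Rightarrow> 'k::field) \<Longrightarrow> op2 K X (bvec p) = lext (\<lambda>z. K (z, p)) X"
  by (simp add: op2_expand)

lemma rack_identity:
  fixes D :: "'a \<Rightarrow> 'a \<times> 'a \<Rightarrow> 'k::field"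
  assumes t1: "tshelf D e T1" and t2: "tshelf D e T2"
  and inv: "\<And>a p. lext (\<lambda>(p1,p2). PhiT T2 p1 (T1 (a, p2))) (tcD D D p) = (\<lambda>c. tce e e p * bvec a c)"
  and fu: "fsupp u" and fv: "fsupp v"
  shows "lext (\<lambda>(p,q). op2 (lhdT D T2) (op2 (lhdT D T1) u (bvec q)) (bvec p)) (lext (tcD D D) v)
       = (\<lambda>x. lfun (tce e e) v * u x)"
proof -
  interpret A: tshelf D e T1 by (rule t1)
  interpret B: tshelf D e T2 by (rule t2)
  have basis: "lext (\<lambda>(p,q). op2 (lhdT D T2) (lhdT D T1 (U, q)) (bvec p)) (tcD D D V)
      = (\<lambda>c. tce e e V * bvec U c)" for U V
  proof -
    obtain a b where U: "U = (a, b)" by (cases U)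
    have "lext (\<lambda>(p,q). op2 (lhdT D T2) (lhdT D T1 (U, q)) (bvec p)) (tcD D D V)
       = lext (\<lambda>(p,q). lext (\<lambda>(q1,q2). lext (\<lambda>z. lhdT D T2 (z, p)) (tens (T1 (a, q1)) (T1 (b, q2)))) (tcD D D q)) (tcD D D V)"
      unfolding U by (simp only: op2_bvec2[OF A.fK]) (simp add: A.K_eq lext_lext split_beta')
    also have "\<dots> = lext (\<lambda>(p,q). lext (\<lambda>(q1,q2). lext (\<lambda>(p1,p2).
          tens (PhiT T2 p1 (T1 (a, q1))) (PhiT T2 p2 (T1 (b, q2)))) (tcD D D p)) (tcD D D q)) (tcD D D V)"
      by (simp add: B.Ktens split_beta')
    also have "\<dots> = lext (\<lambda>(p,q). lext (\<lambda>(p1,p2). lext (\<lambda>(q1,q2).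
          tens (PhiT T2 p1 (T1 (a, q1))) (PhiT T2 p2 (T1 (b, q2)))) (tcD D D q)) (tcD D D p)) (tcD D D V)"
      by (simp only: split_beta', (rule lext_cong2 lext_swap2)+) auto
    also have "\<dots> = lext (\<lambda>(p,q). lext (\<lambda>(p1,p2). lext (\<lambda>(q1,q2).
          tens (PhiT T2 p1 (T1 (a, p2))) (PhiT T2 q1 (T1 (b, q2)))) (tcD D D q)) (tcD D D p)) (tcD D D V)"
      by (rule middle_swap[OF A.coalDD A.cocomDD])
    also have "\<dots> = lext (\<lambda>(p,q). tens (lext (\<lambda>(p1,p2). PhiT T2 p1 (T1 (a, p2))) (tcD D D p))
          (lext (\<lambda>(q1,q2). PhiT T2 q1 (T1 (b, q2))) (tcD D D q))) (tcD D D V)"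
      by (simp only: split_beta' tens_lext1 tens_lext2, (rule lext_cong2 lext_swap2)+) auto
    also have "\<dots> = lext (\<lambda>(p,q) c. tce e e p * (tce e e q * bvec U c)) (tcD D D V)"
      by (simp only: inv) (rule lext_cong2, auto simp: U tens_def bvec_def split_beta' fun_eq_iff)
    also have "\<dots> = (\<lambda>c. tce e e V * bvec U c)"
      by (rule coalg_counitL[OF A.coalDD])
    finally show ?thesis .
  qed
  have fK1: "\<And>x. fsupp (lhdT D T1 x)" by simp
  have fK2: "\<And>x. fsupp (lhdT D T2 x)" by simp
  have "lext (\<lambda>(p,q). op2 (lhdT D T2) (op2 (lhdT D T1) u (bvec q)) (bvec p)) (lext (tcD D D) v)
      = lext (\<lambda>V. lext (\<lambda>(p,q). lext (\<lambda>U. op2 (lhdT D T2) (lhdT D T1 (U, q)) (bvec p)) u) (tcD D D V)) v"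
    using fu fv by (simp add: lext_lext op2_bvec2[OF fu] op2_lext1 split_beta')
  also have "\<dots> = lext (\<lambda>V. lext (\<lambda>U. lext (\<lambda>(p,q). op2 (lhdT D T2) (lhdT D T1 (U, q)) (bvec p)) (tcD D D V)) u) v"
    by (simp only: split_beta', (rule lext_cong2 lext_swap2)+) (auto simp: fu fv)
  also have "\<dots> = lext (\<lambda>V. lext (\<lambda>U c. tce e e V * bvec U c) u) v"
    by (simp only: basis)
  also have "\<dots> = (\<lambda>x. lfun (tce e e) v * u x)"
    by (simp add: lext_const_mult lext_bvec_id fu lext_mult_lfun)
  finally show ?thesis .
qed

context tshelf
begin

lemma R_eq: "Rlhd DD K = RT D T"
proof (rule ext)
  fix X :: "('a \<times> 'a) \<times> ('a \<times> 'a)"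
  obtain u v m n where X: "X = ((u,v),(m,n))" by (metis prod.collapse)
  have "Rlhd DD K X = lext (\<lambda>(m1,m'). lext (\<lambda>(n1,n'). lext (\<lambda>(m2,m3). lext (\<lambda>(n2,n3).
      tens (bvec (m1,n1)) (tens (T (u,(m2,n2))) (T (v,(m3,n3))))) (D n')) (D m')) (D n)) (D m)"
    unfolding X Rlhd_def by (simp add: lext_DD K_eq tens_lext2 split_beta')
  also have "\<dots> = lext (\<lambda>(m1,m'). lext (\<lambda>(m2,m3). lext (\<lambda>(n1,n'). lext (\<lambda>(n2,n3).
      tens (bvec (m1,n1)) (tens (T (u,(m2,n2))) (T (v,(m3,n3))))) (D n')) (D n)) (D m')) (D m)"
    by (simp only: split_beta', (rule lext_cong2 lext_swap2)+) auto
  also have "\<dots> = RT D T X"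
    unfolding X RT_def by (simp add: lext_tens lext_Delta2_bvec split_beta')
  finally show "Rlhd DD K X = RT D T X" .
qed

end

lemma tshelf_intro: "coalgebra D e \<Longrightarrow> cocommutative D \<Longrightarrow> trilinear_shelf D e T \<Longrightarrow> tshelf D e T"
  by (simp add: tshelf_def)

theorem theorem3p13:
  fixes D :: "'a \<Rightarrow> 'a \<times> 'a \<Rightarrow> 'k::field" and e :: "'a \<Rightarrow> 'k"
    and T :: "'a \<times> ('a \<times> 'a) \<Rightarrow> 'a \<Rightarrow> 'k"
  assumes "coalgebra D e" and "cocommutative D" and "trilinear_shelf D e T"
  shows "linear_shelf (tcD D D) (tce e e) (lhdT D T)
     \<and> (trilinear_rack D e T \<longrightarrow>
          linear_rack (tcD D D) (tce e e) (lhdT D T)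
          \<and> Rlhd (tcD D D) (lhdT D T) = RT D T)"
proof -
  have t1: "tshelf D e T" using assms by (rule tshelf_intro)
  interpret t1: tshelf D e T by (rule t1)
  have part1: "linear_shelf (tcD D D) (tce e e) (lhdT D T)" by (rule t1.K_linear_shelf)
  have part2: "linear_rack (tcD D D) (tce e e) (lhdT D T)" if r: "trilinear_rack D e T"
  proof -
    obtain T' where ts': "trilinear_shelf D e T'"
      and h1: "\<And>x y z. fsupp x \<Longrightarrow> fsupp y \<Longrightarrow> fsupp z \<Longrightarrow>
          lext (\<lambda>((p1, p2), (q1, q2)). op3 T' (op3 T x (bvec p2) (bvec q2)) (bvec q1) (bvec p1))
               (tens (lext D y) (lext D z)) = (\<lambda>w. lfun e y * lfun e z * x w)"
      and h2: "\<And>x y z. fsupp x \<Longrightarrow> fsupp y \<Longrightarrow> fsupp z \<Longrightarrow>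
          lext (\<lambda>((p1, p2), (q1, q2)). op3 T (op3 T' x (bvec p2) (bvec q2)) (bvec q1) (bvec p1))
               (tens (lext D y) (lext D z)) = (\<lambda>w. lfun e y * lfun e z * x w)"
      using r unfolding trilinear_rack_def by blast
    have ts2: "trilinear_shelf D e (swapT T')"
      by (rule trilinear_shelf_swapT[OF assms(2) ts'])
    have t2: "tshelf D e (swapT T')" using assms(1,2) ts2 by (rule tshelf_intro)
    interpret t2: tshelf D e "swapT T'" by (rule t2)
    have fT': "\<And>x. fsupp (T' x)"
      using ts' unfolding trilinear_shelf_def coalg_hom_def linmap_def by blast
    have inv1: "lext (\<lambda>(p1,p2). PhiT (swapT T') p1 (T (a, p2))) (tcD D D p) = (\<lambda>c. tce e e p * bvec a c)"
      for a p
    proof -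
      obtain m n where p: "p = (m, n)" by (cases p)
      have "lext (\<lambda>(p1,p2). PhiT (swapT T') p1 (T (a, p2))) (tcD D D p)
         = lext (\<lambda>((p1, p2), (q1, q2)). op3 T' (op3 T (bvec a) (bvec p2) (bvec q2)) (bvec q1) (bvec p1))
               (tens (lext D (bvec m)) (lext D (bvec n)))"
        unfolding p by (simp add: t1.lext_DD lext_tens op3_bvec23_gen PhiT_def split_beta')
      also have "\<dots> = (\<lambda>w. lfun e (bvec m) * lfun e (bvec n) * bvec a w)"
        by (rule h1) auto
      also have "\<dots> = (\<lambda>c. tce e e p * bvec a c)"
        by (simp add: p tce_def lfun_lext)
      finally show ?thesis .
    qed
    have inv2: "lext (\<lambda>(p1,p2). PhiT T p1 (swapT T' (a, p2))) (tcD D D p) = (\<lambda>c. tce e e p * bvec a c)"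
      for a p
    proof -
      obtain m n where p: "p = (m, n)" by (cases p)
      have "lext (\<lambda>(p1,p2). PhiT T p1 (swapT T' (a, p2))) (tcD D D p)
         = lext (\<lambda>(m1,m2). lext (\<lambda>(n1,n2). PhiT T (m1, n1) (T' (a, (n2, m2)))) (D n)) (D m)"
        unfolding p by (simp add: t1.lext_DD split_beta')
      also have "\<dots> = lext (\<lambda>(n1,n2). lext (\<lambda>(m1,m2). PhiT T (m1, n1) (T' (a, (n2, m2)))) (D m)) (D n)"
        by (simp only: split_beta', rule lext_swap2) auto
      also have "\<dots> = lext (\<lambda>((p1, p2), (q1, q2)). op3 T (op3 T' (bvec a) (bvec p2) (bvec q2)) (bvec q1) (bvec p1))
               (tens (lext D (bvec n)) (lext D (bvec m)))"
        by (simp add: lext_tens op3_bvec23_gen fT' split_beta')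
      also have "\<dots> = (\<lambda>w. lfun e (bvec n) * lfun e (bvec m) * bvec a w)"
        by (rule h2) auto
      also have "\<dots> = (\<lambda>c. tce e e p * bvec a c)"
        by (simp add: p tce_def lfun_lext mult_ac)
      finally show ?thesis .
    qed
    show ?thesis
      unfolding linear_rack_def
    proof (intro conjI exI[of _ "lhdT D (swapT T')"] allI impI)
      show "linear_shelf (tcD D D) (tce e e) (lhdT D T)" by (rule part1)
      show "linear_shelf (tcD D D) (tce e e) (lhdT D (swapT T'))" by (rule t2.K_linear_shelf)
      fix u v :: "'a \<times> 'a \<Rightarrow> 'k"
      assume fu: "fsupp u" and fv: "fsupp v"
      show "lext (\<lambda>(p, q). op2 (lhdT D (swapT T')) (op2 (lhdT D T) u (bvec q)) (bvec p)) (lext (tcD D D) v)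
            = (\<lambda>x. lfun (tce e e) v * u x)"
        by (rule rack_identity[OF t1 t2 inv1 fu fv])
      show "lext (\<lambda>(p, q). op2 (lhdT D T) (op2 (lhdT D (swapT T')) u (bvec q)) (bvec p)) (lext (tcD D D) v)
            = (\<lambda>x. lfun (tce e e) v * u x)"
        by (rule rack_identity[OF t2 t1 inv2 fu fv])
    qed
  qed
  show ?thesis using part1 part2 t1.R_eq by blast
qed

end
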